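(* Consider a weakly monotone MP-MFG whose rewards $r^i(x,a,\cdot)$ are continuously differentiable in the distribution argument. Let $(\rho_t)_{t\ge 1}$ be a trajectory of continuous-time fictitious play, and let $\pi_t$ be the associated policies. Assume $t\mapsto\phi(\pi_t)$ is differentiable on $[1,\infty)$. Then for all $t\ge 1$, $$\frac{d}{dt}\phi(\pi_t)\le-\frac1t\,\phi(\pi_t).$$ Consequently $\phi(\pi_t)\le\phi(\pi_1)/t$, so $\phi(\pi_t)=O(1/t)$.
   Context: A multi-population mean field game (MP-MFG) consists of the following data: - a finite state space $\mathcal X$ and a finite action space $\mathcal A$; - $N_p\ge1$ populations and a horizon $N$, with time steps $n=0,\dots,N$; - initial distributions $\mu^i_0\in\Delta\mathcal X$; - a transition kernel $p(x'|x,a)$ independent of the distributions; - rewards $r^i:\mathcal X\times\mathcal A\times(\Delta\mathcal X)^{N_p}\to\mathbb R$. A policy of population $i$ is $\pi^i=(\pi^i_n)_{n=0}^N$ with $\pi^i_n(\cdot|x)\in\Delta\mathcal A$, and $\pi=(\pi^i)_i$. The induced distributions are defined by $\mu^{i,\pi^i}_0=\mu^i_0$ and $\mu^{i,\pi^i}_{n+1}(x')=\sum_{x,a}\pi^i_n(a|x)\,p(x'|x,a)\,\mu^{i,\pi^i}_n(x)$, with $\mu^\pi=(\mu^{i,\pi^i})_i$. The induced state-action distributions are $\rho^{i,\pi^i}_n(x,a)=\mu^{i,\pi^i}_n(x)\,\pi^i_n(a|x)$. The total reward is $$J^i(\pi^i,\mu)=\sum_{n=0}^N\sum_{x,a}\mu^{i,\pi^i}_n(x)\,\pi^i_n(a|x)\,r^i(x,a,\mu_n),\qquad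 \mu_n=(\mu^1_n,\dots,\mu^{N_p}_n).$$ The exploitability is $$\phi(\pi)=\sum_i\Big[\max_{\pi'^i}J^i(\pi'^i,\mu^\pi)-J^i(\pi^i,\mu^\pi)\Big].$$ The game is weakly monotone if the following holds for all families $\rho^i,\rho'^i\in\Delta(\mathcal X\times\mathcal A)$. Let the $x$-marginals be $\mu^i,\mu'^i$, with $\mu=(\mu^i)_i$ and $\mu'=(\mu'^i)_i$. Then $$\sum_i\sum_{x,a}\big(\rho^i(x,a)-\rho'^i(x,a)\big)\big(r^i(x,a,\mu)-r^i(x,a,\mu')\big)\le0.$$ Continuous-time fictitious play is defined as follows. - For $s\in[0,1)$, $\rho^{i,br}_{n,s}$ is the state-action distribution induced by the uniform policy. - For $t\ge 1$, set $$\rho^i_{n,t}=\frac1t\int_0^t\rho^{i,br}_{n,s}\,ds,\qquad \mu^i_{n,t}(x)=\sum_a\rho^i_{n,t}(x,a),\qquad \mu_t=(\mu^i_{n,t})_{i,n}.$$ - For $t\ge 1$, $\rho^{i,br}_{n,t}$ is the state-action distribution $\rho^{i,\pi^{i,br}_t}_n$ induced by a best response policy $\pi^{i,br}_t\in\arg\max_{\pi^i}J^i(\pi^i,\mu_t)$, chosen measurably in $t$. - The associated policy is $\pi^i_{n,t}(a|x)=\rho^i_{n,t}(x,a)/\mu^i_{n,t}(x)$ when $\mu^i_{n,t}(x)>0$, and arbitrary otherwise. With this choice, $\mu^{\pi_t}=\mu_t$. *)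

theory Defs
  imports "HOL-Analysis.Analysis"
begin

definition is_dist :: "('b::finite \<Rightarrow> real) \<Rightarrow> bool" where
  "is_dist d \<longleftrightarrow> (\<forall>y. 0 \<le> d y) \<and> sum d UNIV = 1"

definition is_policy :: "nat \<Rightarrow> (nat \<Rightarrow> 'x::finite \<Rightarrow> 'a::finite \<Rightarrow> real) \<Rightarrow> bool" where
  "is_policy N pol \<longleftrightarrow> (\<forall>n\<le>N. \<forall>x. is_dist (pol n x))"

text \<open>Induced state distribution; P x a x' is the transition probability p(x'|x,a).\<close>
fun state_dist :: "('x::finite \<Rightarrow> real) \<Rightarrow> ('x \<Rightarrow> 'a::finite \<Rightarrow> 'x \<Rightarrow> real)
    \<Rightarrow> (nat \<Rightarrow> 'x \<Rightarrow> 'a \<Rightarrow> real) \<Rightarrow> nat \<Rightarrow> 'x \<Rightarrow> real" where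
  "state_dist m0 P pol 0 = m0"
| "state_dist m0 P pol (Suc n) =
     (\<lambda>x'. \<Sum>x\<in>UNIV. \<Sum>a\<in>UNIV. pol n x a * P x a x' * state_dist m0 P pol n x)"

definition sa_dist :: "('x::finite \<Rightarrow> real) \<Rightarrow> ('x \<Rightarrow> 'a::finite \<Rightarrow> 'x \<Rightarrow> real)
    \<Rightarrow> (nat \<Rightarrow> 'x \<Rightarrow> 'a \<Rightarrow> real) \<Rightarrow> nat \<Rightarrow> 'x \<Rightarrow> 'a \<Rightarrow> real" where
  "sa_dist m0 P pol n x a = state_dist m0 P pol n x * pol n x a"

text \<open>Total reward J^i(pol, mu) of one population with initial distribution m0 and reward R = r^i;
  mu j n is the distribution of population j at time n.\<close>
definition J :: "nat \<Rightarrow> ('x::finite \<Rightarrow> real) \<Rightarrow> ('x \<Rightarrow> 'a::finite \<Rightarrow> 'x \<Rightarrow> real)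
    \<Rightarrow> ('x \<Rightarrow> 'a \<Rightarrow> ('p \<Rightarrow> 'x \<Rightarrow> real) \<Rightarrow> real)
    \<Rightarrow> (nat \<Rightarrow> 'x \<Rightarrow> 'a \<Rightarrow> real) \<Rightarrow> ('p \<Rightarrow> nat \<Rightarrow> 'x \<Rightarrow> real) \<Rightarrow> real" where
  "J N m0 P R pol mu =
     (\<Sum>n\<le>N. \<Sum>x\<in>UNIV. \<Sum>a\<in>UNIV. state_dist m0 P pol n x * pol n x a * R x a (\<lambda>j. mu j n))"

definition induced :: "('p \<Rightarrow> 'x::finite \<Rightarrow> real) \<Rightarrow> ('x \<Rightarrow> 'a::finite \<Rightarrow> 'x \<Rightarrow> real)
    \<Rightarrow> ('p \<Rightarrow> nat \<Rightarrow> 'x \<Rightarrow> 'a \<Rightarrow> real) \<Rightarrow> 'p \<Rightarrow> nat \<Rightarrow> 'x \<Rightarrow> real" where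
  "induced mu0 P pl = (\<lambda>i. state_dist (mu0 i) P (pl i))"

definition exploitability :: "nat \<Rightarrow> ('p::finite \<Rightarrow> 'x::finite \<Rightarrow> real) \<Rightarrow> ('x \<Rightarrow> 'a::finite \<Rightarrow> 'x \<Rightarrow> real)
    \<Rightarrow> ('p \<Rightarrow> 'x \<Rightarrow> 'a \<Rightarrow> ('p \<Rightarrow> 'x \<Rightarrow> real) \<Rightarrow> real)
    \<Rightarrow> ('p \<Rightarrow> nat \<Rightarrow> 'x \<Rightarrow> 'a \<Rightarrow> real) \<Rightarrow> real" where
  "exploitability N mu0 P r pl =
     (\<Sum>i\<in>UNIV. Sup {J N (mu0 i) P (r i) pol' (induced mu0 P pl) | pol'. is_policy N pol'}
                 - J N (mu0 i) P (r i) (pl i) (induced mu0 P pl))"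

definition weakly_monotone :: "('p::finite \<Rightarrow> 'x::finite \<Rightarrow> 'a::finite \<Rightarrow> ('p \<Rightarrow> 'x \<Rightarrow> real) \<Rightarrow> real) \<Rightarrow> bool" where
  "weakly_monotone r \<longleftrightarrow>
     (\<forall>\<rho> \<rho>' :: 'p \<Rightarrow> 'x \<Rightarrow> 'a \<Rightarrow> real.
        (\<forall>i. is_dist (\<lambda>(x, a). \<rho> i x a)) \<longrightarrow> (\<forall>i. is_dist (\<lambda>(x, a). \<rho>' i x a)) \<longrightarrow>
        (\<Sum>i\<in>UNIV. \<Sum>x\<in>UNIV. \<Sum>a\<in>UNIV. (\<rho> i x a - \<rho>' i x a) *
            (r i x a (\<lambda>j y. \<Sum>b\<in>UNIV. \<rho> j y b) - r i x a (\<lambda>j y. \<Sum>b\<in>UNIV. \<rho>' j y b))) \<le> 0)"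

text \<open>Identification of distribution profiles with Euclidean vectors, for differentiability.\<close>
definition vec_to_fun :: "real ^ 'x ^ 'p \<Rightarrow> 'p \<Rightarrow> 'x \<Rightarrow> real" where
  "vec_to_fun m = (\<lambda>j y. m $ j $ y)"

definition simplex_profiles :: "(real ^ 'x::finite ^ 'p::finite) set" where
  "simplex_profiles = {m. \<forall>j. is_dist (\<lambda>y. m $ j $ y)}"

definition C1_on :: "('n::euclidean_space \<Rightarrow> real) \<Rightarrow> 'n set \<Rightarrow> bool" where
  "C1_on f S \<longleftrightarrow> (\<exists>g. continuous_on S g \<and>
       (\<forall>m\<in>S. (f has_derivative (\<lambda>h. g m \<bullet> h)) (at m within S)))"

text \<open>Fictitious play: averaged state-action distributions rho_t and marginals mu_t,
  generated by the best-response policies pibr s (uniform for s in [0,1)).\<close>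
definition fp_rho :: "('p \<Rightarrow> 'x::finite \<Rightarrow> real) \<Rightarrow> ('x \<Rightarrow> 'a::finite \<Rightarrow> 'x \<Rightarrow> real)
    \<Rightarrow> (real \<Rightarrow> 'p \<Rightarrow> nat \<Rightarrow> 'x \<Rightarrow> 'a \<Rightarrow> real) \<Rightarrow> real \<Rightarrow> 'p \<Rightarrow> nat \<Rightarrow> 'x \<Rightarrow> 'a \<Rightarrow> real" where
  "fp_rho mu0 P pibr t i n x a = (1 / t) * integral {0..t} (\<lambda>s. sa_dist (mu0 i) P (pibr s i) n x a)"

definition fp_mu :: "('p \<Rightarrow> 'x::finite \<Rightarrow> real) \<Rightarrow> ('x \<Rightarrow> 'a::finite \<Rightarrow> 'x \<Rightarrow> real)
    \<Rightarrow> (real \<Rightarrow> 'p \<Rightarrow> nat \<Rightarrow> 'x \<Rightarrow> 'a \<Rightarrow> real) \<Rightarrow> real \<Rightarrow> 'p \<Rightarrow> nat \<Rightarrow> 'x \<Rightarrow> real" where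
  "fp_mu mu0 P pibr t i n x = (\<Sum>a\<in>UNIV. fp_rho mu0 P pibr t i n x a)"

end

theory Submission
  imports Defs
begin

lemma sd_dist:
  assumes m0: "is_dist m0" and tr: "\<forall>x a. is_dist (P x a)" and pl: "is_policy N pl"
  shows "n \<le> N \<Longrightarrow> is_dist (state_dist m0 P pl n)"
proof (induction n)
  case 0 then show ?case using m0 by simp
next
  case (Suc n)
  then have IH: "is_dist (state_dist m0 P pl n)" by simp
  have pn: "\<And>x. is_dist (pl n x)" using pl Suc.prems unfolding is_policy_def by auto
  have nn: "\<forall>y. 0 \<le> state_dist m0 P pl (Suc n) y"
    using IH pn tr unfolding is_dist_def by (auto intro!: sum_nonneg)
  have "sum (state_dist m0 P pl (Suc n)) UNIV
      = (\<Sum>x'\<in>UNIV. \<Sum>x\<in>UNIV. \<Sum>a\<in>UNIV. pl n x a * P x a x' * state_dist m0 P pl n x)"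
    by simp
  also have "\<dots> = (\<Sum>x\<in>UNIV. \<Sum>x'\<in>UNIV. \<Sum>a\<in>UNIV. pl n x a * P x a x' * state_dist m0 P pl n x)"
    by (rule sum.swap)
  also have "\<dots> = (\<Sum>x\<in>UNIV. \<Sum>a\<in>UNIV. \<Sum>x'\<in>UNIV. pl n x a * P x a x' * state_dist m0 P pl n x)"
    by (rule sum.cong[OF refl], rule sum.swap)
  also have "\<dots> = (\<Sum>x\<in>UNIV. \<Sum>a\<in>UNIV. pl n x a * state_dist m0 P pl n x * (\<Sum>x'\<in>UNIV. P x a x'))"
    by (simp add: sum_distrib_left sum_distrib_right mult_ac)
  also have "\<dots> = (\<Sum>x\<in>UNIV. state_dist m0 P pl n x * (\<Sum>a\<in>UNIV. pl n x a))"
    using tr unfolding is_dist_def by (simp add: sum_distrib_left sum_distrib_right mult_ac)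
  also have "\<dots> = 1" using pn IH unfolding is_dist_def by simp
  finally show ?case using nn unfolding is_dist_def by simp
qed


definition occ :: "nat \<Rightarrow> ('x::finite \<Rightarrow> real) \<Rightarrow> ('x \<Rightarrow> 'a::finite \<Rightarrow> 'x \<Rightarrow> real) \<Rightarrow> (nat \<Rightarrow> 'x \<Rightarrow> 'a \<Rightarrow> real) \<Rightarrow> bool" where
  "occ N m0 P R \<longleftrightarrow> (\<forall>n\<le>N. \<forall>x a. 0 \<le> R n x a) \<and> (\<forall>x. (\<Sum>a\<in>UNIV. R 0 x a) = m0 x) \<and>
     (\<forall>n<N. \<forall>x'. (\<Sum>a\<in>UNIV. R (Suc n) x' a) = (\<Sum>x\<in>UNIV. \<Sum>a\<in>UNIV. R n x a * P x a x'))"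

lemma occ_policy:
  assumes o: "occ N m0 P R"
    and pd: "\<forall>n\<le>N. \<forall>x. is_dist (pl n x)"
    and pp: "\<forall>n\<le>N. \<forall>x a. (\<Sum>b\<in>UNIV. R n x b) > 0 \<longrightarrow> pl n x a = R n x a / (\<Sum>b\<in>UNIV. R n x b)"
  shows "n \<le> N \<Longrightarrow> state_dist m0 P pl n x = (\<Sum>b\<in>UNIV. R n x b) \<and> (\<forall>a. state_dist m0 P pl n x * pl n x a = R n x a)"
proof (induction n arbitrary: x)
  case 0
  have sd: "state_dist m0 P pl 0 x = (\<Sum>b\<in>UNIV. R 0 x b)" using o unfolding occ_def by simp
  show ?case
  proof (intro conjI allI)
    show "state_dist m0 P pl 0 x = (\<Sum>b\<in>UNIV. R 0 x b)" by (rule sd)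
    fix a
    show "state_dist m0 P pl 0 x * pl 0 x a = R 0 x a"
    proof (cases "(\<Sum>b\<in>UNIV. R 0 x b) > 0")
      case True then show ?thesis using pp sd by simp
    next
      case False
      have nn: "\<forall>b. 0 \<le> R 0 x b" using o unfolding occ_def by simp
      then have "(\<Sum>b\<in>UNIV. R 0 x b) = 0" using False by (meson sum_nonneg not_less order.antisym)
      then have "R 0 x a = 0" using nn by (simp add: sum_nonneg_eq_0_iff)
      then show ?thesis using sd \<open>(\<Sum>b\<in>UNIV. R 0 x b) = 0\<close> by simp
    qed
  qed
next
  case (Suc n)
  then have IH: "\<And>x. state_dist m0 P pl n x = (\<Sum>b\<in>UNIV. R n x b) \<and> (\<forall>a. state_dist m0 P pl n x * pl n x a = R n x a)" using Suc.IH Suc.prems Suc_leD by blast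
  have "state_dist m0 P pl (Suc n) x = (\<Sum>y\<in>UNIV. \<Sum>a\<in>UNIV. pl n y a * P y a x * state_dist m0 P pl n y)" by simp
  also have "\<dots> = (\<Sum>y\<in>UNIV. \<Sum>a\<in>UNIV. R n y a * P y a x)"
    by (rule sum.cong[OF refl], rule sum.cong[OF refl]) (metis IH mult.commute mult.left_commute)
  also have "\<dots> = (\<Sum>b\<in>UNIV. R (Suc n) x b)" using o Suc.prems unfolding occ_def by simp
  finally have sd: "state_dist m0 P pl (Suc n) x = (\<Sum>b\<in>UNIV. R (Suc n) x b)" .
  show ?case
  proof (intro conjI allI)
    show "state_dist m0 P pl (Suc n) x = (\<Sum>b\<in>UNIV. R (Suc n) x b)" by (rule sd)
    fix a
    show "state_dist m0 P pl (Suc n) x * pl (Suc n) x a = R (Suc n) x a"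
    proof (cases "(\<Sum>b\<in>UNIV. R (Suc n) x b) > 0")
      case True then show ?thesis using pp sd Suc.prems by simp
    next
      case False
      have nn: "\<forall>b. 0 \<le> R (Suc n) x b" using o Suc.prems unfolding occ_def by simp
      then have z: "(\<Sum>b\<in>UNIV. R (Suc n) x b) = 0" using False by (meson sum_nonneg not_less order.antisym)
      then have "R (Suc n) x a = 0" using nn by (simp add: sum_nonneg_eq_0_iff)
      then show ?thesis using sd z by simp
    qed
  qed
qed

lemma occ_exists_policy:
  assumes o: "occ N m0 P R"
  shows "\<exists>pl. is_policy N pl \<and> (\<forall>n\<le>N. \<forall>x a. sa_dist m0 P pl n x a = R n x a)"
proof -
  define pl where "pl n x a = (if (\<Sum>b\<in>UNIV. R n x b) > 0 then R n x a / (\<Sum>b\<in>UNIV. R n x b)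
      else 1 / real CARD('b))" for n x and a :: 'b
  have pd: "\<forall>n\<le>N. \<forall>x. is_dist (pl n x)"
  proof (intro allI impI)
    fix n x assume n: "n \<le> N"
    show "is_dist (pl n x)"
    proof (cases "(\<Sum>b\<in>UNIV. R n x b) > 0")
      case True
      then show ?thesis using o n unfolding is_dist_def pl_def occ_def
        by (auto simp: sum_divide_distrib[symmetric])
    next
      case False
      then show ?thesis unfolding is_dist_def pl_def by simp
    qed
  qed
  have pp: "\<forall>n\<le>N. \<forall>x a. (\<Sum>b\<in>UNIV. R n x b) > 0 \<longrightarrow> pl n x a = R n x a / (\<Sum>b\<in>UNIV. R n x b)"
    unfolding pl_def by simp
  show ?thesis
    using occ_policy[OF o pd pp] pd unfolding is_policy_def sa_dist_def by auto
qed

lemma occ_sum1: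
  assumes o: "occ N m0 P R" and m0: "is_dist m0" and tr: "\<forall>x a. is_dist (P x a)" and n: "n \<le> N"
  shows "(\<Sum>x\<in>UNIV. \<Sum>a\<in>UNIV. R n x a) = 1"
proof -
  obtain pl where pl: "is_policy N pl" "\<forall>n\<le>N. \<forall>x a. sa_dist m0 P pl n x a = R n x a"
    using occ_exists_policy[OF o] by blast
  have d: "is_dist (state_dist m0 P pl n)" using sd_dist[OF m0 tr pl(1) n] .
  have "(\<Sum>x\<in>UNIV. \<Sum>a\<in>UNIV. R n x a) = (\<Sum>x\<in>UNIV. state_dist m0 P pl n x * (\<Sum>a\<in>UNIV. pl n x a))"
    using pl(2) n unfolding sa_dist_def by (simp add: sum_distrib_left)
  also have "\<dots> = 1" using d pl(1) n unfolding is_dist_def is_policy_def by simp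
  finally show ?thesis .
qed

lemma occ_bounds:
  assumes o: "occ N m0 P R" and m0: "is_dist m0" and tr: "\<forall>x a. is_dist (P x a)" and n: "n \<le> N"
  shows "0 \<le> R n x a \<and> R n x a \<le> 1"
proof -
  have nn: "\<forall>y b. 0 \<le> R n y b" using o n unfolding occ_def by simp
  have "R n x a \<le> (\<Sum>b\<in>UNIV. R n x b)"
    using nn by (intro member_le_sum) auto
  also have "\<dots> \<le> (\<Sum>y\<in>UNIV. \<Sum>b\<in>UNIV. R n y b)"
    using nn by (intro member_le_sum) (auto intro: sum_nonneg)
  finally show ?thesis using occ_sum1[OF o m0 tr n] nn by simp
qed

lemma occ_is_dist:
  assumes o: "occ N m0 P R" and m0: "is_dist m0" and tr: "\<forall>x a. is_dist (P x a)" and n: "n \<le> N"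
  shows "is_dist (\<lambda>(x, a). R n x a)"
  using occ_sum1[OF assms] o n unfolding is_dist_def occ_def
  by (auto simp: UNIV_Times_UNIV[symmetric] sum.cartesian_product[symmetric] simp del: UNIV_Times_UNIV)

lemma sa_occ:
  assumes pl: "is_policy N pl" and m0: "is_dist m0" and tr: "\<forall>x a. is_dist (P x a)"
  shows "occ N m0 P (sa_dist m0 P pl)"
proof -
  have sdd: "\<And>n. n \<le> N \<Longrightarrow> is_dist (state_dist m0 P pl n)" using sd_dist[OF m0 tr pl] .
  have pd: "\<And>n x. n \<le> N \<Longrightarrow> is_dist (pl n x)" using pl unfolding is_policy_def by auto
  have marg: "\<And>n x. n \<le> N \<Longrightarrow> (\<Sum>a\<in>UNIV. sa_dist m0 P pl n x a) = state_dist m0 P pl n x"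
    using pd unfolding sa_dist_def is_dist_def by (simp add: sum_distrib_left[symmetric])
  show ?thesis unfolding occ_def
  proof (intro conjI allI impI)
    fix n x a assume "n \<le> N"
    then show "0 \<le> sa_dist m0 P pl n x a" using sdd pd unfolding sa_dist_def is_dist_def by simp
  next
    fix x show "(\<Sum>a\<in>UNIV. sa_dist m0 P pl 0 x a) = m0 x" using marg[of 0] by simp
  next
    fix n x' assume n: "n < N"
    have "(\<Sum>a\<in>UNIV. sa_dist m0 P pl (Suc n) x' a) = state_dist m0 P pl (Suc n) x'"
      using marg n by simp
    also have "\<dots> = (\<Sum>x\<in>UNIV. \<Sum>a\<in>UNIV. sa_dist m0 P pl n x a * P x a x')"
      unfolding sa_dist_def by (simp add: mult_ac)
    finally show "(\<Sum>a\<in>UNIV. sa_dist m0 P pl (Suc n) x' a) = (\<Sum>x\<in>UNIV. \<Sum>a\<in>UNIV. sa_dist m0 P pl n x a * P x a x')" .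
  qed
qed

lemma J_sa: "J N m0 P R pl mu = (\<Sum>n\<le>N. \<Sum>x\<in>UNIV. \<Sum>a\<in>UNIV. sa_dist m0 P pl n x a * R x a (\<lambda>j. mu j n))"
  unfolding J_def sa_dist_def by simp

lemma J_cong_sa:
  assumes "\<forall>n\<le>N. \<forall>x a. sa_dist m0 P pl n x a = sa_dist m0' P pl' n x a"
    and "\<forall>n\<le>N. \<forall>j. mu j n = mu' j n"
  shows "J N m0 P R pl mu = J N m0' P R pl' mu'"
  unfolding J_sa using assms by (intro sum.cong) auto

lemma alg_split: fixes A B h t :: real shows "0<h \<Longrightarrow> h<t \<Longrightarrow> (A+B)/t = A/(t-h) + (h/t)*(B/h - A/(t-h))"
proof -
  assume a: "0<h" "h<t"
  have "(h/t)*(B/h - A/(t-h)) = B/t - h*A/(t*(t-h))" using a by (simp add: field_simps)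
  moreover have "A/(t-h) - h*A/(t*(t-h)) = A/t"
  proof -
    have "A/(t-h) = A*t/(t*(t-h))" using a by simp
    then have "A/(t-h) - h*A/(t*(t-h)) = (A*t - h*A)/(t*(t-h))" by (simp add: diff_divide_distrib)
    also have "\<dots> = A*(t-h)/(t*(t-h))" by (simp add: algebra_simps)
    also have "\<dots> = A/t" using a by simp
    finally show ?thesis .
  qed
  ultimately show ?thesis by (simp add: add_divide_distrib)
qed


locale fpl =
  fixes N :: nat
    and mu0 :: "'p::finite \<Rightarrow> 'x::finite \<Rightarrow> real"
    and P :: "'x \<Rightarrow> 'a::finite \<Rightarrow> 'x \<Rightarrow> real"
    and r :: "'p \<Rightarrow> 'x \<Rightarrow> 'a \<Rightarrow> ('p \<Rightarrow> 'x \<Rightarrow> real) \<Rightarrow> real"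
    and pibr :: "real \<Rightarrow> 'p \<Rightarrow> nat \<Rightarrow> 'x \<Rightarrow> 'a \<Rightarrow> real"
    and pol :: "real \<Rightarrow> 'p \<Rightarrow> nat \<Rightarrow> 'x \<Rightarrow> 'a \<Rightarrow> real"
  assumes init: "\<forall>i. is_dist (mu0 i)"
    and trans: "\<forall>x a. is_dist (P x a)"
    and mono: "weakly_monotone r"
    and C1: "\<forall>i x a. C1_on (\<lambda>m::real ^ 'x ^ 'p. r i x a (vec_to_fun m)) simplex_profiles"
    and unif: "\<forall>s\<in>{0..<1}. \<forall>i n x a. pibr s i n x a = 1 / real CARD('a)"
    and br: "\<forall>t\<ge>1. \<forall>i. is_policy N (pibr t i) \<and>
               (\<forall>pol'. is_policy N pol' \<longrightarrow>
                  J N (mu0 i) P (r i) pol' (fp_mu mu0 P pibr t)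
                    \<le> J N (mu0 i) P (r i) (pibr t i) (fp_mu mu0 P pibr t))"
    and meas: "\<forall>i n x a. set_borel_measurable borel {0..} (\<lambda>s. pibr s i n x a)"
    and pol_pos: "\<forall>t\<ge>1. \<forall>i n x a. fp_mu mu0 P pibr t i n x > 0 \<longrightarrow>
               pol t i n x a = fp_rho mu0 P pibr t i n x a / fp_mu mu0 P pibr t i n x"
    and pol_dist: "\<forall>t\<ge>1. \<forall>i n x. is_dist (pol t i n x)"
begin

abbreviation "sa s i \<equiv> sa_dist (mu0 i) P (pibr s i)"
abbreviation "rho \<equiv> fp_rho mu0 P pibr"
abbreviation "mu \<equiv> fp_mu mu0 P pibr"

definition avg :: "real \<Rightarrow> real \<Rightarrow> 'p \<Rightarrow> nat \<Rightarrow> 'x \<Rightarrow> 'a \<Rightarrow> real" where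
  "avg u v i n x a = (1 / (v - u)) * integral {u..v} (\<lambda>s. sa s i n x a)"

lemma pol_s: "0 \<le> s \<Longrightarrow> is_policy N (pibr s i)"
proof (cases "s < 1")
  case True
  assume "0 \<le> s"
  then have "\<forall>n x a. pibr s i n x a = 1 / real CARD('a)" using unif True by auto
  then show ?thesis unfolding is_policy_def is_dist_def by simp
next
  case False then show ?thesis using br by auto
qed

lemma sa_occ_s: "0 \<le> s \<Longrightarrow> occ N (mu0 i) P (sa s i)"
  using sa_occ[OF pol_s init[rule_format] trans] by simp

lemma sa_bounds: "0 \<le> s \<Longrightarrow> n \<le> N \<Longrightarrow> 0 \<le> sa s i n x a \<and> sa s i n x a \<le> 1"
  using occ_bounds[OF sa_occ_s init[rule_format] trans] by simp

lemma sa_sum1: "0 \<le> s \<Longrightarrow> n \<le> N \<Longrightarrow> (\<Sum>x\<in>UNIV. \<Sum>a\<in>UNIV. sa s i n x a) = 1"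
  using occ_sum1[OF sa_occ_s init[rule_format] trans] by simp

lemma pibr_meas:
  assumes u: "0 \<le> u"
  shows "(\<lambda>s. pibr s i n x a) \<in> borel_measurable (lebesgue_on {u..v})"
proof -
  have "(\<lambda>s. indicat_real {0..} s *\<^sub>R pibr s i n x a) \<in> borel_measurable borel"
    using meas unfolding set_borel_measurable_def by blast
  then have "(\<lambda>s. indicat_real {0..} s *\<^sub>R pibr s i n x a) \<in> borel_measurable (lebesgue_on {u..v})"
    by (metis measurable_lborel2 measurable_restrict_space1 measurable_completion)
  moreover have "\<And>s. s \<in> space (lebesgue_on {u..v}) \<Longrightarrow> indicat_real {0..} s *\<^sub>R pibr s i n x a = pibr s i n x a"
    using u by (auto simp: indicator_def)
  ultimately show ?thesis
    using measurable_cong[of "lebesgue_on {u..v}" "\<lambda>s. indicat_real {0..} s *\<^sub>R pibr s i n x a" "\<lambda>s. pibr s i n x a" borel]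
    by blast
qed

lemma sd_meas:
  assumes u: "0 \<le> u"
  shows "(\<lambda>s. state_dist (mu0 i) P (pibr s i) n x) \<in> borel_measurable (lebesgue_on {u..v})"
proof (induction n arbitrary: x)
  case 0 then show ?case by simp
next
  case (Suc n)
  show ?case
    by (simp, intro borel_measurable_sum borel_measurable_times pibr_meas[OF u] Suc borel_measurable_const)
qed

lemma sa_meas:
  assumes u: "0 \<le> u"
  shows "(\<lambda>s. sa s i n x a) \<in> borel_measurable (lebesgue_on {u..v})"
  unfolding sa_dist_def by (intro borel_measurable_times pibr_meas[OF u] sd_meas[OF u])

lemma sa_int:
  assumes u: "0 \<le> u" and n: "n \<le> N"
  shows "(\<lambda>s. sa s i n x a) integrable_on {u..v}"
proof (rule measurable_bounded_by_integrable_imp_integrable_real[where g="\<lambda>_. 1"])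
  show "(\<lambda>s. sa s i n x a) \<in> borel_measurable (lebesgue_on {u..v})" by (rule sa_meas[OF u])
  show "(\<lambda>_. 1::real) integrable_on {u..v}" by (rule integrable_const_ivl)
  show "\<And>s. s \<in> {u..v} \<Longrightarrow> \<bar>sa s i n x a\<bar> \<le> 1" using sa_bounds u n by fastforce
  show "{u..v} \<in> sets lebesgue" by simp
qed

lemma avg_occ:
  assumes u: "0 \<le> u" and uv: "u < v"
  shows "occ N (mu0 i) P (avg u v i)"
proof -
  have I: "\<And>n x a. n \<le> N \<Longrightarrow> (\<lambda>s. sa s i n x a) integrable_on {u..v}" using sa_int[OF u] by blast
  have c: "0 < 1 / (v - u)" using uv by simp
  show ?thesis unfolding occ_def
  proof (intro conjI allI impI)
    fix n x a assume n: "n \<le> N"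
    show "0 \<le> avg u v i n x a" unfolding avg_def using c u
      by (intro mult_nonneg_nonneg integral_nonneg I n) (auto intro: sa_bounds[THEN conjunct1, OF _ n])
  next
    fix x
    have "(\<Sum>a\<in>UNIV. avg u v i 0 x a) = (1 / (v - u)) * integral {u..v} (\<lambda>s. \<Sum>a\<in>UNIV. sa s i 0 x a)"
      unfolding avg_def by (simp add: sum_distrib_left integral_sum I)
    also have "\<dots> = (1 / (v - u)) * integral {u..v} (\<lambda>s. mu0 i x)"
    proof -
      have "\<And>s. s \<in> {u..v} \<Longrightarrow> (\<Sum>a\<in>UNIV. sa s i 0 x a) = mu0 i x"
        using sa_occ_s u unfolding occ_def by auto
      then have "integral {u..v} (\<lambda>s. \<Sum>a\<in>UNIV. sa s i 0 x a) = integral {u..v} (\<lambda>s. mu0 i x)"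
        by (intro integral_cong) auto
      then show ?thesis by simp
    qed
    also have "\<dots> = mu0 i x" using uv by simp
    finally show "(\<Sum>a\<in>UNIV. avg u v i 0 x a) = mu0 i x" .
  next
    fix n x' assume n: "n < N"
    have "(\<Sum>a\<in>UNIV. avg u v i (Suc n) x' a) = (1 / (v - u)) * integral {u..v} (\<lambda>s. \<Sum>a\<in>UNIV. sa s i (Suc n) x' a)"
      unfolding avg_def using n by (simp add: sum_distrib_left integral_sum I)
    also have "\<dots> = (1 / (v - u)) * integral {u..v} (\<lambda>s. \<Sum>x\<in>UNIV. \<Sum>a\<in>UNIV. sa s i n x a * P x a x')"
    proof -
      have "\<And>s. s \<in> {u..v} \<Longrightarrow> (\<Sum>a\<in>UNIV. sa s i (Suc n) x' a) = (\<Sum>x\<in>UNIV. \<Sum>a\<in>UNIV. sa s i n x a * P x a x')"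
        using sa_occ_s u n unfolding occ_def by auto
      then have "integral {u..v} (\<lambda>s. \<Sum>a\<in>UNIV. sa s i (Suc n) x' a) = integral {u..v} (\<lambda>s. \<Sum>x\<in>UNIV. \<Sum>a\<in>UNIV. sa s i n x a * P x a x')"
        by (intro integral_cong) auto
      then show ?thesis by simp
    qed
    also have "\<dots> = (\<Sum>x\<in>UNIV. \<Sum>a\<in>UNIV. avg u v i n x a * P x a x')"
    proof -
      have In: "\<And>x a. (\<lambda>s. sa s i n x a * P x a x') integrable_on {u..v}"
        using I n by (intro integrable_on_mult_left) simp
      have "integral {u..v} (\<lambda>s. \<Sum>x\<in>UNIV. \<Sum>a\<in>UNIV. sa s i n x a * P x a x')
          = (\<Sum>x\<in>UNIV. integral {u..v} (\<lambda>s. \<Sum>a\<in>UNIV. sa s i n x a * P x a x'))"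
        by (rule integral_sum) (auto intro!: integrable_sum In)
      also have "\<dots> = (\<Sum>x\<in>UNIV. \<Sum>a\<in>UNIV. integral {u..v} (\<lambda>s. sa s i n x a * P x a x'))"
        by (intro sum.cong refl integral_sum) (auto intro: In)
      also have "\<dots> = (\<Sum>x\<in>UNIV. \<Sum>a\<in>UNIV. integral {u..v} (\<lambda>s. sa s i n x a) * P x a x')"
        by (simp add: integral_mult_left)
      finally show ?thesis unfolding avg_def by (simp add: sum_distrib_left mult_ac)
    qed
    finally show "(\<Sum>a\<in>UNIV. avg u v i (Suc n) x' a) = (\<Sum>x\<in>UNIV. \<Sum>a\<in>UNIV. avg u v i n x a * P x a x')" .
  qed
qed

lemma rho_avg: "0 < t \<Longrightarrow> rho t i = avg 0 t i"
  unfolding fp_rho_def avg_def by (intro ext) simp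

lemma rho_occ: "0 < t \<Longrightarrow> occ N (mu0 i) P (rho t i)"
  using rho_avg avg_occ[of 0 t] by simp

lemma avg_bounds: "0 \<le> u \<Longrightarrow> u < v \<Longrightarrow> n \<le> N \<Longrightarrow> 0 \<le> avg u v i n x a \<and> avg u v i n x a \<le> 1"
  using occ_bounds[OF avg_occ init[rule_format] trans] by simp

lemma rho_bounds: "0 < t \<Longrightarrow> n \<le> N \<Longrightarrow> 0 \<le> rho t i n x a \<and> rho t i n x a \<le> 1"
  using occ_bounds[OF rho_occ init[rule_format] trans] by simp

lemma rho_sum1: "0 < t \<Longrightarrow> n \<le> N \<Longrightarrow> (\<Sum>x\<in>UNIV. \<Sum>a\<in>UNIV. rho t i n x a) = 1"
  using occ_sum1[OF rho_occ init[rule_format] trans] by simp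

lemma rho_split:
  assumes h: "0 < h" "h < t" and n: "n \<le> N"
  shows "rho t i n x a = rho (t - h) i n x a + (h / t) * (avg (t - h) t i n x a - rho (t - h) i n x a)"
proof -
  have I: "(\<lambda>s. sa s i n x a) integrable_on {0..t}" using sa_int[OF _ n] by simp
  have comb: "integral {0..t - h} (\<lambda>s. sa s i n x a) + integral {t - h..t} (\<lambda>s. sa s i n x a) = integral {0..t} (\<lambda>s. sa s i n x a)"
    using Henstock_Kurzweil_Integration.integral_combine[OF _ _ I, of "t - h"] h by simp
  show ?thesis
    unfolding fp_rho_def avg_def using alg_split[OF h, of "integral {0..t - h} (\<lambda>s. sa s i n x a)" "integral {t - h..t} (\<lambda>s. sa s i n x a)"] comb
    by simp
qed

end


lemma finite_subseq:
  fixes f :: "nat \<Rightarrow> 'i \<Rightarrow> real"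
  assumes "finite S" and "\<forall>k. \<forall>j\<in>S. \<bar>f k j\<bar> \<le> B"
  shows "\<exists>\<sigma> l. strict_mono \<sigma> \<and> (\<forall>j\<in>S. (\<lambda>k. f (\<sigma> k) j) \<longlonglongrightarrow> l j)"
  using assms
proof (induction S arbitrary: f rule: finite_induct)
  case empty
  then show ?case by (intro exI[of _ id] exI[of _ "\<lambda>_. 0"]) (simp add: strict_mono_def)
next
  case (insert j0 S)
  then obtain \<sigma>1 l where s1: "strict_mono \<sigma>1" "\<forall>j\<in>S. (\<lambda>k. f (\<sigma>1 k) j) \<longlonglongrightarrow> l j" by blast
  have "bounded (range (\<lambda>k. f (\<sigma>1 k) j0))"
    using insert.prems by (intro boundedI[where B=B]) auto
  then obtain l0 \<sigma>2 where s2: "strict_mono \<sigma>2" "((\<lambda>k. f (\<sigma>1 k) j0) \<circ> \<sigma>2) \<longlonglongrightarrow> l0"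
    using bounded_imp_convergent_subsequence by blast
  have sm: "strict_mono (\<sigma>1 \<circ> \<sigma>2)" using s1(1) s2(1) by (simp add: strict_mono_def)
  have "\<forall>j\<in>insert j0 S. (\<lambda>k. f ((\<sigma>1 \<circ> \<sigma>2) k) j) \<longlonglongrightarrow> (l(j0 := l0)) j"
  proof
    fix j assume j: "j \<in> insert j0 S"
    show "(\<lambda>k. f ((\<sigma>1 \<circ> \<sigma>2) k) j) \<longlonglongrightarrow> (l(j0 := l0)) j"
    proof (cases "j = j0")
      case True then show ?thesis using s2(2) by (simp add: o_def)
    next
      case False
      then have "j \<in> S" using j by simp
      then have "((\<lambda>k. f (\<sigma>1 k) j) \<circ> \<sigma>2) \<longlonglongrightarrow> l j"
        using s1(2) s2(1) LIMSEQ_subseq_LIMSEQ by blast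
      then show ?thesis using False by (simp add: o_def)
    qed
  qed
  then show ?case using sm by blast
qed

lemma deriv_seq:
  fixes f :: "'n::euclidean_space \<Rightarrow> real"
  assumes d: "(f has_derivative (\<lambda>h. G \<bullet> h)) (at x within S)"
    and yS: "\<forall>k. y k \<in> S" and cp: "\<forall>k. c k > 0" and c0: "c \<longlonglongrightarrow> 0"
    and q: "(\<lambda>k. (x - y k) /\<^sub>R c k) \<longlonglongrightarrow> w"
  shows "(\<lambda>k. (f x - f (y k)) / c k) \<longlonglongrightarrow> G \<bullet> w"
proof -
  define E where "E y = f y - f x - G \<bullet> (y - x)" for y
  have eq: "(f x - f (y k)) / c k = G \<bullet> ((x - y k) /\<^sub>R c k) - E (y k) / c k" for k
    using cp[rule_format, of k] unfolding E_def
    by (simp add: inner_diff_right field_simps inner_commute)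
  have yx: "(\<lambda>k. y k - x) \<longlonglongrightarrow> 0"
  proof -
    have "(\<lambda>k. - (c k *\<^sub>R ((x - y k) /\<^sub>R c k))) \<longlonglongrightarrow> - (0 *\<^sub>R w)"
      by (intro tendsto_intros c0 q)
    moreover have "- (c k *\<^sub>R ((x - y k) /\<^sub>R c k)) = y k - x" for k
    proof -
      have "c k \<noteq> 0" using cp[rule_format, of k] by simp
      then show ?thesis by simp
    qed
    ultimately show ?thesis by simp
  qed
  have nq: "(\<lambda>k. norm ((x - y k) /\<^sub>R c k)) \<longlonglongrightarrow> norm w" by (intro tendsto_intros q)
  have E0: "(\<lambda>k. E (y k) / c k) \<longlonglongrightarrow> 0"
  proof (rule LIMSEQ_I)
    fix e :: real assume e: "0 < e"
    define e' where "e' = e / (norm w + 2)"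
    have nw: "0 < norm w + 2" using norm_ge_zero[of w] by linarith
    have e': "0 < e'" using e nw unfolding e'_def by (rule divide_pos_pos)
    obtain dd where dd: "dd > 0" "\<forall>y\<in>S. norm (y - x) < dd \<longrightarrow> norm (f y - f x - G \<bullet> (y - x)) \<le> e' * norm (y - x)"
      using d e' unfolding has_derivative_within_alt by blast
    obtain k1 where k1: "\<forall>k\<ge>k1. norm (y k - x - 0) < dd" using yx dd(1) LIMSEQ_D by blast
    obtain k2 where k2: "\<forall>k\<ge>k2. norm (norm ((x - y k) /\<^sub>R c k) - norm w) < 1" using nq LIMSEQ_D[of _ "norm w" 1] by force
    show "\<exists>no. \<forall>k\<ge>no. norm (E (y k) / c k - 0) < e"
    proof (intro exI allI impI)
      fix k assume k: "max k1 k2 \<le> k"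
      have ck: "c k > 0" using cp by simp
      have "\<bar>E (y k)\<bar> \<le> e' * norm (y k - x)" using dd(2) yS k1 k unfolding E_def by auto
      moreover have "norm (y k - x) = c k * norm ((x - y k) /\<^sub>R c k)" using ck by (simp add: norm_minus_commute)
      moreover have "norm ((x - y k) /\<^sub>R c k) < norm w + 1" using k2 k by auto
      ultimately have "\<bar>E (y k)\<bar> \<le> e' * (c k * (norm w + 1))"
        by (smt (verit) e' ck mult_left_mono mult_pos_pos)
      then have "\<bar>E (y k) / c k\<bar> \<le> e' * (norm w + 1)" using ck by (simp add: abs_div pos_divide_le_eq mult_ac)
      also have "\<dots> < e" unfolding e'_def using e nw by (simp add: field_simps)
      finally show "norm (E (y k) / c k - 0) < e" by simp
    qed
  qed
  have "(\<lambda>k. G \<bullet> ((x - y k) /\<^sub>R c k) - E (y k) / c k) \<longlonglongrightarrow> G \<bullet> w - 0"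
    by (intro tendsto_intros q E0)
  then show ?thesis using eq by simp
qed


definition vm :: "('p::finite \<Rightarrow> 'x::finite \<Rightarrow> real) \<Rightarrow> real ^ 'x ^ 'p" where
  "vm f = (\<chi> j y. f j y)"

lemma vec_nth_lambda[simp]: "vec_nth (vec_lambda g) = g"
  by (rule ext) simp

lemma vec_to_fun_vm[simp]: "vec_to_fun (vm f) = f"
  unfolding vec_to_fun_def vm_def by simp

lemma vm_simplex: "(\<forall>j. is_dist (f j)) \<Longrightarrow> vm f \<in> simplex_profiles"
  unfolding simplex_profiles_def vm_def by simp

context fpl
begin

definition V :: "'p \<Rightarrow> ('p \<Rightarrow> nat \<Rightarrow> 'x \<Rightarrow> real) \<Rightarrow> real" where
  "V i m = Sup {J N (mu0 i) P (r i) pol' m | pol'. is_policy N pol'}"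

lemma J_bound:
  assumes pl: "is_policy N pl"
  shows "J N (mu0 i) P (r i) pl m \<le> (\<Sum>n\<le>N. \<Sum>x\<in>UNIV. \<Sum>a\<in>UNIV. \<bar>r i x a (\<lambda>j. m j n)\<bar>)"
proof -
  have o: "occ N (mu0 i) P (sa_dist (mu0 i) P pl)" using sa_occ[OF pl init[rule_format] trans] .
  show ?thesis unfolding J_sa
  proof (intro sum_mono)
    fix n x a assume n: "n \<in> {..N}"
    have b: "0 \<le> sa_dist (mu0 i) P pl n x a" "sa_dist (mu0 i) P pl n x a \<le> 1"
      using occ_bounds[OF o init[rule_format] trans, of n] n by auto
    have "sa_dist (mu0 i) P pl n x a * r i x a (\<lambda>j. m j n) \<le> sa_dist (mu0 i) P pl n x a * \<bar>r i x a (\<lambda>j. m j n)\<bar>"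
      using b by (intro mult_left_mono) auto
    also have "\<dots> \<le> 1 * \<bar>r i x a (\<lambda>j. m j n)\<bar>" using b by (intro mult_right_mono) auto
    finally show "sa_dist (mu0 i) P pl n x a * r i x a (\<lambda>j. m j n) \<le> \<bar>r i x a (\<lambda>j. m j n)\<bar>" by simp
  qed
qed

lemma V_bdd: "bdd_above {J N (mu0 i) P (r i) pol' m | pol'. is_policy N pol'}"
  using J_bound unfolding bdd_above_def by blast

lemma V_ge: "is_policy N pl \<Longrightarrow> J N (mu0 i) P (r i) pl m \<le> V i m"
  unfolding V_def by (rule cSup_upper[OF _ V_bdd]) blast

lemma V_occ:
  assumes "occ N (mu0 i) P R"
  shows "(\<Sum>n\<le>N. \<Sum>x\<in>UNIV. \<Sum>a\<in>UNIV. R n x a * r i x a (\<lambda>j. m j n)) \<le> V i m"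
proof -
  obtain pl where pl: "is_policy N pl" "\<forall>n\<le>N. \<forall>x a. sa_dist (mu0 i) P pl n x a = R n x a"
    using occ_exists_policy[OF assms] by blast
  have "(\<Sum>n\<le>N. \<Sum>x\<in>UNIV. \<Sum>a\<in>UNIV. R n x a * r i x a (\<lambda>j. m j n)) = J N (mu0 i) P (r i) pl m"
    unfolding J_sa using pl(2) by (intro sum.cong) auto
  then show ?thesis using V_ge[OF pl(1)] by simp
qed

lemma V_br:
  assumes t: "1 \<le> t"
  shows "V i (mu t) = (\<Sum>n\<le>N. \<Sum>x\<in>UNIV. \<Sum>a\<in>UNIV. sa t i n x a * r i x a (\<lambda>j. mu t j n))"
proof -
  have pb: "is_policy N (pibr t i)" using br t by blast
  have "V i (mu t) = J N (mu0 i) P (r i) (pibr t i) (mu t)"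
  proof (rule antisym)
    show "V i (mu t) \<le> J N (mu0 i) P (r i) (pibr t i) (mu t)"
      unfolding V_def using br t pb by (intro cSup_least) auto
    show "J N (mu0 i) P (r i) (pibr t i) (mu t) \<le> V i (mu t)" by (rule V_ge[OF pb])
  qed
  then show ?thesis by (simp add: J_sa)
qed

lemma V_cong: "\<forall>n\<le>N. \<forall>j. m j n = m' j n \<Longrightarrow> V i m = V i m'"
proof -
  assume h: "\<forall>n\<le>N. \<forall>j. m j n = m' j n"
  have "{J N (mu0 i) P (r i) pol' m | pol'. is_policy N pol'} = {J N (mu0 i) P (r i) pol' m' | pol'. is_policy N pol'}"
    using J_cong_sa[OF _ h] by (metis (no_types, lifting))
  then show ?thesis unfolding V_def by simp
qed

lemma pol_sa:
  assumes t: "1 \<le> t" and n: "n \<le> N"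
  shows "state_dist (mu0 i) P (pol t i) n x = mu t i n x \<and> sa_dist (mu0 i) P (pol t i) n x a = rho t i n x a"
proof -
  have o: "occ N (mu0 i) P (rho t i)" using rho_occ t by simp
  have pd: "\<forall>n\<le>N. \<forall>x. is_dist (pol t i n x)" using pol_dist t by blast
  have pp: "\<forall>n\<le>N. \<forall>x a. (\<Sum>b\<in>UNIV. rho t i n x b) > 0 \<longrightarrow> pol t i n x a = rho t i n x a / (\<Sum>b\<in>UNIV. rho t i n x b)"
    using pol_pos t unfolding fp_mu_def by blast
  have h: "state_dist (mu0 i) P (pol t i) n x = (\<Sum>b\<in>UNIV. rho t i n x b) \<and> (\<forall>a. state_dist (mu0 i) P (pol t i) n x * pol t i n x a = rho t i n x a)"
    by (rule occ_policy[OF o pd pp n])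
  then show ?thesis unfolding fp_mu_def sa_dist_def by blast
qed

lemma phi_eq:
  assumes t: "1 \<le> t"
  shows "exploitability N mu0 P r (pol t) =
    (\<Sum>i\<in>UNIV. V i (mu t) - (\<Sum>n\<le>N. \<Sum>x\<in>UNIV. \<Sum>a\<in>UNIV. rho t i n x a * r i x a (\<lambda>j. mu t j n)))"
proof -
  have ind: "\<forall>n\<le>N. \<forall>j. induced mu0 P (pol t) j n = mu t j n"
    using pol_sa[OF t] unfolding induced_def by auto
  have "\<And>i. J N (mu0 i) P (r i) (pol t i) (induced mu0 P (pol t))
      = (\<Sum>n\<le>N. \<Sum>x\<in>UNIV. \<Sum>a\<in>UNIV. rho t i n x a * r i x a (\<lambda>j. mu t j n))"
    unfolding J_sa using pol_sa[OF t] ind by (intro sum.cong) auto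
  moreover have "\<And>i. Sup {J N (mu0 i) P (r i) pol' (induced mu0 P (pol t)) | pol'. is_policy N pol'} = V i (mu t)"
    using V_cong[OF ind] unfolding V_def by simp
  ultimately show ?thesis unfolding exploitability_def by simp
qed

lemma mu_dist: "0 < t \<Longrightarrow> n \<le> N \<Longrightarrow> is_dist (mu t j n)"
  unfolding is_dist_def fp_mu_def using rho_bounds rho_sum1 by (auto intro: sum_nonneg)

lemma mu_simplex: "0 < t \<Longrightarrow> n \<le> N \<Longrightarrow> vm (\<lambda>j. mu t j n) \<in> simplex_profiles"
  using mu_dist by (intro vm_simplex) auto

definition gg :: "'p \<Rightarrow> 'x \<Rightarrow> 'a \<Rightarrow> real ^ 'x ^ 'p \<Rightarrow> real ^ 'x ^ 'p" where
  "gg i x a = (SOME g. continuous_on simplex_profiles g \<and>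
       (\<forall>m\<in>simplex_profiles. ((\<lambda>m. r i x a (vec_to_fun m)) has_derivative (\<lambda>h. g m \<bullet> h)) (at m within simplex_profiles)))"

lemma gg_deriv:
  "m \<in> simplex_profiles \<Longrightarrow> ((\<lambda>m. r i x a (vec_to_fun m)) has_derivative (\<lambda>h. gg i x a m \<bullet> h)) (at m within simplex_profiles)"
proof -
  assume m: "m \<in> simplex_profiles"
  have "\<exists>g. continuous_on simplex_profiles g \<and>
       (\<forall>m\<in>simplex_profiles. ((\<lambda>m. r i x a (vec_to_fun m)) has_derivative (\<lambda>h. g m \<bullet> h)) (at m within simplex_profiles))"
    using C1 unfolding C1_on_def by blast
  then have "continuous_on simplex_profiles (gg i x a) \<and>
       (\<forall>m\<in>simplex_profiles. ((\<lambda>m. r i x a (vec_to_fun m)) has_derivative (\<lambda>h. gg i x a m \<bullet> h)) (at m within simplex_profiles))"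
    unfolding gg_def by (rule someI_ex)
  then show ?thesis using m by blast
qed

lemma r_cont:
  "m \<in> simplex_profiles \<Longrightarrow> continuous (at m within simplex_profiles) (\<lambda>m. r i x a (vec_to_fun m))"
  using gg_deriv has_derivative_continuous by blast

end


lemma occ_limit:
  assumes o: "\<forall>k. occ N m0 P (Rk k)"
    and lim: "\<forall>n\<le>N. \<forall>x a. (\<lambda>k. Rk k n x a) \<longlonglongrightarrow> R n x a"
  shows "occ N m0 P R"
  unfolding occ_def
proof (intro conjI allI impI)
  fix n x a assume n: "n \<le> N"
  have "\<forall>k. 0 \<le> Rk k n x a" using o n unfolding occ_def by blast
  moreover have L: "(\<lambda>k. Rk k n x a) \<longlonglongrightarrow> R n x a" using lim n by blast
  ultimately show "0 \<le> R n x a" using LIMSEQ_le_const[OF L, of 0] by blast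
next
  fix x
  have L1: "(\<lambda>k. \<Sum>a\<in>UNIV. Rk k 0 x a) \<longlonglongrightarrow> (\<Sum>a\<in>UNIV. R 0 x a)"
    using lim by (intro tendsto_sum) auto
  have L2: "(\<lambda>k. \<Sum>a\<in>UNIV. Rk k 0 x a) = (\<lambda>k. m0 x)" using o unfolding occ_def by auto
  have "(\<lambda>k. m0 x) \<longlonglongrightarrow> (\<Sum>a\<in>UNIV. R 0 x a)" using L1 unfolding L2 .
  from LIMSEQ_unique[OF this tendsto_const] show "(\<Sum>a\<in>UNIV. R 0 x a) = m0 x" by simp
next
  fix n x' assume n: "n < N"
  have "(\<lambda>k. \<Sum>a\<in>UNIV. Rk k (Suc n) x' a) \<longlonglongrightarrow> (\<Sum>a\<in>UNIV. R (Suc n) x' a)"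
    using lim n by (intro tendsto_sum) auto
  moreover have "(\<lambda>k. \<Sum>a\<in>UNIV. Rk k (Suc n) x' a) \<longlonglongrightarrow> (\<Sum>x\<in>UNIV. \<Sum>a\<in>UNIV. R n x a * P x a x')" (is "?A \<longlonglongrightarrow> ?B")
  proof -
    have "(\<lambda>k. \<Sum>x\<in>UNIV. \<Sum>a\<in>UNIV. Rk k n x a * P x a x') \<longlonglongrightarrow> (\<Sum>x\<in>UNIV. \<Sum>a\<in>UNIV. R n x a * P x a x')"
      using lim n by (intro tendsto_sum tendsto_mult tendsto_const) auto
    moreover have "(\<lambda>k. \<Sum>a\<in>UNIV. Rk k (Suc n) x' a) = (\<lambda>k. \<Sum>x\<in>UNIV. \<Sum>a\<in>UNIV. Rk k n x a * P x a x')"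
      using o n unfolding occ_def by auto
    ultimately show "?A \<longlonglongrightarrow> ?B" by simp
  qed
  ultimately show "(\<Sum>a\<in>UNIV. R (Suc n) x' a) = (\<Sum>x\<in>UNIV. \<Sum>a\<in>UNIV. R n x a * P x a x')"
    by (rule LIMSEQ_unique)
qed

context fpl
begin

lemma inf_mono:
  fixes A B :: "'p \<Rightarrow> 'x \<Rightarrow> 'a \<Rightarrow> real"
  assumes dA: "\<forall>i. is_dist (\<lambda>(x, a). A i x a)" and dB: "\<forall>i. is_dist (\<lambda>(x, a). B i x a)"
  shows "(\<Sum>i\<in>UNIV. \<Sum>x\<in>UNIV. \<Sum>a\<in>UNIV. (B i x a - A i x a) *
            (gg i x a (vm (\<lambda>j y. \<Sum>b\<in>UNIV. A j y b)) \<bullet> (vm (\<lambda>j y. \<Sum>b\<in>UNIV. B j y b) - vm (\<lambda>j y. \<Sum>b\<in>UNIV. A j y b)))) \<le> 0"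
proof -
  define mA where "mA = vm (\<lambda>j y. \<Sum>b\<in>UNIV. A j y b)"
  define mB where "mB = vm (\<lambda>j y. \<Sum>b\<in>UNIV. B j y b)"
  define e where "e k = 1 / real (Suc k)" for k
  define C where "C k i x a = A i x a + e k * (B i x a - A i x a)" for k i x a
  have e0: "e k > 0" for k unfolding e_def by simp
  have e1: "e k \<le> 1" for k unfolding e_def by simp
  have elim: "e \<longlonglongrightarrow> 0" unfolding e_def by (rule LIMSEQ_Suc[OF lim_inverse_n'])
  have dC: "\<forall>i. is_dist (\<lambda>(x, a). C k i x a)" for k
  proof
    fix i
    have "C k i x a = (1 - e k) * A i x a + e k * B i x a" for x a unfolding C_def by (simp add: algebra_simps)
    moreover have "0 \<le> (1 - e k) * A i x a + e k * B i x a" for x a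
      using dA dB e0[of k] e1[of k] unfolding is_dist_def
      by (metis (no_types, lifting) add_nonneg_nonneg case_prod_conv diff_ge_0_iff_ge less_imp_le mult_nonneg_nonneg)
    moreover have "(\<Sum>p\<in>UNIV. (case p of (x, a) \<Rightarrow> (1 - e k) * A i x a + e k * B i x a)) = 1"
    proof -
      have "(\<Sum>p\<in>UNIV. (case p of (x, a) \<Rightarrow> (1 - e k) * A i x a + e k * B i x a))
          = (1 - e k) * (\<Sum>p\<in>UNIV. (case p of (x, a) \<Rightarrow> A i x a)) + e k * (\<Sum>p\<in>UNIV. (case p of (x, a) \<Rightarrow> B i x a))"
        by (simp add: sum.distrib sum_distrib_left case_prod_beta)
      then show ?thesis using dA dB unfolding is_dist_def by simp
    qed
    ultimately have "(\<forall>p. 0 \<le> (case p of (x, a) \<Rightarrow> C k i x a)) \<and> (\<Sum>p\<in>UNIV. (case p of (x, a) \<Rightarrow> C k i x a)) = 1"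
      by (simp add: case_prod_beta)
    then show "is_dist (\<lambda>(x, a). C k i x a)" unfolding is_dist_def by simp
  qed
  define mC where "mC k = vm (\<lambda>j y. \<Sum>b\<in>UNIV. C k j y b)" for k
  have mCeq: "mC k = mA + e k *\<^sub>R (mB - mA)" for k
    unfolding mC_def mA_def mB_def C_def vm_def
    by (simp add: vec_eq_iff sum.distrib sum_distrib_left sum_subtractf algebra_simps)
  have simA: "mA \<in> simplex_profiles" unfolding mA_def
    using dA unfolding is_dist_def
    by (intro vm_simplex) (auto simp: is_dist_def UNIV_Times_UNIV[symmetric] sum.cartesian_product[symmetric] intro: sum_nonneg simp del: UNIV_Times_UNIV)
  have simC: "mC k \<in> simplex_profiles" for k unfolding mC_def
    using dC[of k] unfolding is_dist_def
    by (intro vm_simplex) (auto simp: is_dist_def UNIV_Times_UNIV[symmetric] sum.cartesian_product[symmetric] intro: sum_nonneg simp del: UNIV_Times_UNIV)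
  define f where "f i x a m = r i x a (vec_to_fun m)" for i x a m
  have mono_k: "(\<Sum>i\<in>UNIV. \<Sum>x\<in>UNIV. \<Sum>a\<in>UNIV. (B i x a - A i x a) * ((f i x a (mC k) - f i x a mA) / e k)) \<le> 0" for k
  proof -
    have "(\<Sum>i\<in>UNIV. \<Sum>x\<in>UNIV. \<Sum>a\<in>UNIV. (C k i x a - A i x a) *
            (r i x a (\<lambda>j y. \<Sum>b\<in>UNIV. C k j y b) - r i x a (\<lambda>j y. \<Sum>b\<in>UNIV. A j y b))) \<le> 0"
      using mono dC[of k] dA unfolding weakly_monotone_def by blast
    then have "e k * (\<Sum>i\<in>UNIV. \<Sum>x\<in>UNIV. \<Sum>a\<in>UNIV. (B i x a - A i x a) * (f i x a (mC k) - f i x a mA)) \<le> 0"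
      unfolding C_def f_def mC_def mA_def by (simp add: sum_distrib_left mult_ac)
    then have "(\<Sum>i\<in>UNIV. \<Sum>x\<in>UNIV. \<Sum>a\<in>UNIV. (B i x a - A i x a) * (f i x a (mC k) - f i x a mA)) \<le> 0"
      using e0[of k] by (simp add: mult_le_0_iff)
    moreover have "(\<Sum>i\<in>UNIV. \<Sum>x\<in>UNIV. \<Sum>a\<in>UNIV. (B i x a - A i x a) * ((f i x a (mC k) - f i x a mA) / e k))
        = (\<Sum>i\<in>UNIV. \<Sum>x\<in>UNIV. \<Sum>a\<in>UNIV. (B i x a - A i x a) * (f i x a (mC k) - f i x a mA)) / e k"
      by (simp add: sum_divide_distrib)
    ultimately show ?thesis using e0[of k] by (simp add: divide_nonpos_pos)
  qed
  have lim_f: "(\<lambda>k. (f i x a (mC k) - f i x a mA) / e k) \<longlonglongrightarrow> gg i x a mA \<bullet> (mB - mA)" for i x a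
  proof -
    have "(\<lambda>k. (f i x a mA - f i x a (mC k)) / e k) \<longlonglongrightarrow> gg i x a mA \<bullet> (-(mB - mA))"
    proof (rule deriv_seq[where S=simplex_profiles])
      show "(f i x a has_derivative (\<bullet>) (gg i x a mA)) (at mA within simplex_profiles)"
        unfolding f_def using gg_deriv[OF simA] by simp
      show "\<forall>k. mC k \<in> simplex_profiles" using simC by blast
      show "\<forall>k. 0 < e k" using e0 by blast
      show "e \<longlonglongrightarrow> 0" by (rule elim)
      have "(mA - mC k) /\<^sub>R e k = - (mB - mA)" for k using e0[of k] unfolding mCeq by simp
      then show "(\<lambda>k. (mA - mC k) /\<^sub>R e k) \<longlonglongrightarrow> - (mB - mA)" by simp
    qed
    then have "(\<lambda>k. - ((f i x a mA - f i x a (mC k)) / e k)) \<longlonglongrightarrow> - (gg i x a mA \<bullet> (-(mB - mA)))"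
      by (rule tendsto_minus)
    moreover have "(\<lambda>k. - ((f i x a mA - f i x a (mC k)) / e k)) = (\<lambda>k. (f i x a (mC k) - f i x a mA) / e k)"
      by (rule ext) (simp add: minus_divide_left)
    moreover have "- (gg i x a mA \<bullet> (-(mB - mA))) = gg i x a mA \<bullet> (mB - mA)" by (simp only: inner_minus_right minus_minus)
    ultimately show ?thesis by simp
  qed
  have "(\<lambda>k. \<Sum>i\<in>UNIV. \<Sum>x\<in>UNIV. \<Sum>a\<in>UNIV. (B i x a - A i x a) * ((f i x a (mC k) - f i x a mA) / e k))
      \<longlonglongrightarrow> (\<Sum>i\<in>UNIV. \<Sum>x\<in>UNIV. \<Sum>a\<in>UNIV. (B i x a - A i x a) * (gg i x a mA \<bullet> (mB - mA)))"
    by (intro tendsto_sum tendsto_mult tendsto_const lim_f)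
  then have "(\<Sum>i\<in>UNIV. \<Sum>x\<in>UNIV. \<Sum>a\<in>UNIV. (B i x a - A i x a) * (gg i x a mA \<bullet> (mB - mA))) \<le> 0"
    by (rule LIMSEQ_le_const2) (use mono_k in blast)
  then show ?thesis unfolding mA_def mB_def .
qed

end


context fpl
begin

lemma rho_lip:
  assumes s: "1 \<le> s" "s < t" and n: "n \<le> N"
  shows "\<bar>rho t i n x a - rho s i n x a\<bar> \<le> (t - s) / t"
proof -
  have h: "0 < t - s" "t - s < t" using s by auto
  have e: "rho t i n x a = rho s i n x a + ((t - s) / t) * (avg s t i n x a - rho s i n x a)"
    using rho_split[OF h n, of i x a] by simp
  have b1: "0 \<le> avg s t i n x a \<and> avg s t i n x a \<le> 1" using avg_bounds s n by simp
  have b2: "0 \<le> rho s i n x a \<and> rho s i n x a \<le> 1" using rho_bounds s n by simp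
  have "\<bar>avg s t i n x a - rho s i n x a\<bar> \<le> 1" using b1 b2 by linarith
  moreover have "0 \<le> (t - s) / t" using h by simp
  ultimately have "((t - s) / t) * \<bar>avg s t i n x a - rho s i n x a\<bar> \<le> (t - s) / t * 1"
    by (intro mult_left_mono) auto
  then have "\<bar>((t - s) / t) * (avg s t i n x a - rho s i n x a)\<bar> \<le> (t - s) / t"
    using \<open>0 \<le> (t - s) / t\<close> by (simp only: abs_mult abs_of_nonneg mult_1_right)
  then show ?thesis using e by simp
qed

lemma mu_lip:
  assumes s: "1 \<le> s" "s \<le> t" and n: "n \<le> N"
  shows "\<bar>mu s i n x - mu t i n x\<bar> \<le> real CARD('a) * ((t - s) / t)"
proof (cases "s = t")
  case True then show ?thesis by simp
next
  case False
  then have s': "s < t" using s by simp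
  have "\<bar>mu s i n x - mu t i n x\<bar> = \<bar>\<Sum>a\<in>UNIV. rho t i n x a - rho s i n x a\<bar>"
    unfolding fp_mu_def by (simp add: sum_subtractf abs_minus_commute)
  also have "\<dots> \<le> (\<Sum>a\<in>UNIV. \<bar>rho t i n x a - rho s i n x a\<bar>)" by (rule sum_abs)
  also have "\<dots> \<le> (\<Sum>a\<in>(UNIV::'a set). (t - s) / t)" by (intro sum_mono rho_lip[OF s(1) s' n])
  finally show ?thesis by simp
qed

lemma ev_within: "\<forall>\<^sub>F s in at t within S. s \<in> S"
  by (simp add: eventually_at_filter)

lemma mu_tendsto:
  assumes t: "1 \<le> t" and n: "n \<le> N"
  shows "((\<lambda>s. vm (\<lambda>j. mu s j n)) \<longlongrightarrow> vm (\<lambda>j. mu t j n)) (at t within {1..t})"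
proof -
  have c: "((\<lambda>s. mu s j n y) \<longlongrightarrow> mu t j n y) (at t within {1..t})" for j y
  proof -
    have "((\<lambda>s. mu s j n y - mu t j n y) \<longlongrightarrow> 0) (at t within {1..t})"
    proof (rule Lim_null_comparison)
      show "\<forall>\<^sub>F s in at t within {1..t}. norm (mu s j n y - mu t j n y) \<le> real CARD('a) * ((t - s) / t)"
        using ev_within[where t=t and S="{1..t}"] by eventually_elim (use mu_lip n in auto)
      have "((\<lambda>s. real CARD('a) * ((t - s) / t)) \<longlongrightarrow> real CARD('a) * ((t - t) / t)) (at t within {1..t})"
        by (intro tendsto_intros) (use t in auto)
      then show "((\<lambda>s. real CARD('a) * ((t - s) / t)) \<longlongrightarrow> 0) (at t within {1..t})" by simp
    qed
    then show ?thesis by (simp add: LIM_zero_iff)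
  qed
  show ?thesis unfolding vm_def
    by (intro tendsto_vec_lambda c)
qed

definition Fdev :: "real \<Rightarrow> real \<Rightarrow> real" where
  "Fdev t s = (\<Sum>i\<in>UNIV. \<Sum>n\<le>N. \<Sum>x\<in>UNIV. \<Sum>a\<in>UNIV. \<bar>r i x a (\<lambda>j. mu s j n) - r i x a (\<lambda>j. mu t j n)\<bar>)"

lemma Fdev_tendsto:
  assumes t: "1 \<le> t"
  shows "((\<lambda>s. Fdev t s) \<longlongrightarrow> 0) (at t within {1..t})"
proof -
  have "((\<lambda>s. r i x a (\<lambda>j. mu s j n)) \<longlongrightarrow> r i x a (\<lambda>j. mu t j n)) (at t within {1..t})" if n: "n \<le> N" for i x a n
  proof -
    have ct: "continuous (at (vm (\<lambda>j. mu t j n)) within simplex_profiles) (\<lambda>m. r i x a (vec_to_fun m))"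
      using r_cont mu_simplex t n by simp
    have "((\<lambda>s. r i x a (vec_to_fun (vm (\<lambda>j. mu s j n)))) \<longlongrightarrow> r i x a (vec_to_fun (vm (\<lambda>j. mu t j n)))) (at t within {1..t})"
    proof (rule continuous_within_tendsto_compose[OF ct])
      show "\<forall>\<^sub>F s in at t within {1..t}. vm (\<lambda>j. mu s j n) \<in> simplex_profiles"
        using ev_within[where t=t and S="{1..t}"] by eventually_elim (use mu_simplex n in auto)
      show "((\<lambda>s. vm (\<lambda>j. mu s j n)) \<longlongrightarrow> vm (\<lambda>j. mu t j n)) (at t within {1..t})"
        by (rule mu_tendsto[OF t n])
    qed
    then show ?thesis by simp
  qed
  then have "((\<lambda>s. Fdev t s) \<longlongrightarrow> (\<Sum>i\<in>UNIV. \<Sum>n\<le>N. \<Sum>x\<in>UNIV. \<Sum>a\<in>UNIV. \<bar>r i x a (\<lambda>j. mu t j n) - r i x a (\<lambda>j. mu t j n)\<bar>)) (at t within {1..t})"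
    unfolding Fdev_def by (intro tendsto_sum tendsto_rabs tendsto_diff tendsto_const) auto
  then show ?thesis by simp
qed

lemma Fdev_small:
  assumes t: "1 \<le> t" and e: "0 < e"
  shows "\<exists>d>0. \<forall>s. 1 \<le> s \<longrightarrow> s \<le> t \<longrightarrow> t - s < d \<longrightarrow> Fdev t s < e"
proof -
  have "\<forall>\<^sub>F s in at t within {1..t}. dist (Fdev t s) 0 < e"
    using Fdev_tendsto[OF t] e unfolding tendsto_iff by blast
  then obtain d where d: "d > 0" "\<forall>s\<in>{1..t}. s \<noteq> t \<and> dist s t < d \<longrightarrow> dist (Fdev t s) 0 < e"
    unfolding eventually_at by blast
  show ?thesis
  proof (intro exI[of _ d] conjI allI impI)
    fix s assume s: "1 \<le> s" "s \<le> t" "t - s < d"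
    show "Fdev t s < e"
    proof (cases "s = t")
      case True then show ?thesis using e unfolding Fdev_def by simp
    next
      case False
      then have "dist (Fdev t s) 0 < e" using d s by (auto simp: dist_real_def)
      then show ?thesis by simp
    qed
  qed (rule d(1))
qed

lemma avg_lin:
  assumes u: "0 \<le> u" "u < v"
  shows "(\<Sum>n\<le>N. \<Sum>x\<in>UNIV. \<Sum>a\<in>UNIV. avg u v i n x a * c n x a)
     = (1 / (v - u)) * integral {u..v} (\<lambda>s. \<Sum>n\<le>N. \<Sum>x\<in>UNIV. \<Sum>a\<in>UNIV. sa s i n x a * c n x a)"
    and "(\<lambda>s. \<Sum>n\<le>N. \<Sum>x\<in>UNIV. \<Sum>a\<in>UNIV. sa s i n x a * c n x a) integrable_on {u..v}"
proof -
  have In: "\<And>n x a. n \<in> {..N} \<Longrightarrow> (\<lambda>s. sa s i n x a * c n x a) integrable_on {u..v}"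
    using sa_int u by (intro integrable_on_mult_left) simp
  show I: "(\<lambda>s. \<Sum>n\<le>N. \<Sum>x\<in>UNIV. \<Sum>a\<in>UNIV. sa s i n x a * c n x a) integrable_on {u..v}"
    by (intro integrable_sum In) auto
  have "integral {u..v} (\<lambda>s. \<Sum>n\<le>N. \<Sum>x\<in>UNIV. \<Sum>a\<in>UNIV. sa s i n x a * c n x a)
      = (\<Sum>n\<le>N. integral {u..v} (\<lambda>s. \<Sum>x\<in>UNIV. \<Sum>a\<in>UNIV. sa s i n x a * c n x a))"
    by (rule integral_sum) (auto intro!: integrable_sum In)
  also have "\<dots> = (\<Sum>n\<le>N. \<Sum>x\<in>UNIV. integral {u..v} (\<lambda>s. \<Sum>a\<in>UNIV. sa s i n x a * c n x a))"
    by (intro sum.cong refl integral_sum) (auto intro!: integrable_sum In)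
  also have "\<dots> = (\<Sum>n\<le>N. \<Sum>x\<in>UNIV. \<Sum>a\<in>UNIV. integral {u..v} (\<lambda>s. sa s i n x a * c n x a))"
    by (intro sum.cong refl integral_sum) (auto intro!: In)
  also have "\<dots> = (\<Sum>n\<le>N. \<Sum>x\<in>UNIV. \<Sum>a\<in>UNIV. integral {u..v} (\<lambda>s. sa s i n x a) * c n x a)"
    by (simp add: integral_mult_left)
  finally show "(\<Sum>n\<le>N. \<Sum>x\<in>UNIV. \<Sum>a\<in>UNIV. avg u v i n x a * c n x a)
     = (1 / (v - u)) * integral {u..v} (\<lambda>s. \<Sum>n\<le>N. \<Sum>x\<in>UNIV. \<Sum>a\<in>UNIV. sa s i n x a * c n x a)"
    unfolding avg_def by (simp add: sum_distrib_left mult_ac)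
qed

lemma sa_dev:
  assumes s: "0 \<le> s" and q: "1 \<le> q"
  shows "\<bar>(\<Sum>n\<le>N. \<Sum>x\<in>UNIV. \<Sum>a\<in>UNIV. sa s i n x a * r i x a (\<lambda>j. mu q j n))
        - (\<Sum>n\<le>N. \<Sum>x\<in>UNIV. \<Sum>a\<in>UNIV. sa s i n x a * r i x a (\<lambda>j. mu t j n))\<bar> \<le> Fdev t q"
proof -
  have "\<bar>(\<Sum>n\<le>N. \<Sum>x\<in>UNIV. \<Sum>a\<in>UNIV. sa s i n x a * r i x a (\<lambda>j. mu q j n))
        - (\<Sum>n\<le>N. \<Sum>x\<in>UNIV. \<Sum>a\<in>UNIV. sa s i n x a * r i x a (\<lambda>j. mu t j n))\<bar>
      = \<bar>\<Sum>n\<le>N. \<Sum>x\<in>UNIV. \<Sum>a\<in>UNIV. sa s i n x a * (r i x a (\<lambda>j. mu q j n) - r i x a (\<lambda>j. mu t j n))\<bar>"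
    by (simp add: sum_subtractf algebra_simps)
  also have "\<dots> \<le> (\<Sum>n\<le>N. \<bar>\<Sum>x\<in>UNIV. \<Sum>a\<in>UNIV. sa s i n x a * (r i x a (\<lambda>j. mu q j n) - r i x a (\<lambda>j. mu t j n))\<bar>)"
    by (rule sum_abs)
  also have "\<dots> \<le> (\<Sum>n\<le>N. \<Sum>x\<in>UNIV. \<bar>\<Sum>a\<in>UNIV. sa s i n x a * (r i x a (\<lambda>j. mu q j n) - r i x a (\<lambda>j. mu t j n))\<bar>)"
    by (intro sum_mono sum_abs)
  also have "\<dots> \<le> (\<Sum>n\<le>N. \<Sum>x\<in>UNIV. \<Sum>a\<in>UNIV. \<bar>sa s i n x a * (r i x a (\<lambda>j. mu q j n) - r i x a (\<lambda>j. mu t j n))\<bar>)"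
    by (intro sum_mono sum_abs)
  also have "\<dots> \<le> (\<Sum>n\<le>N. \<Sum>x\<in>UNIV. \<Sum>a\<in>UNIV. \<bar>r i x a (\<lambda>j. mu q j n) - r i x a (\<lambda>j. mu t j n)\<bar>)"
  proof (intro sum_mono)
    fix n x a assume n: "n \<in> {..N}"
    have b: "0 \<le> sa s i n x a" "sa s i n x a \<le> 1" using sa_bounds s n by auto
    show "\<bar>sa s i n x a * (r i x a (\<lambda>j. mu q j n) - r i x a (\<lambda>j. mu t j n))\<bar> \<le> \<bar>r i x a (\<lambda>j. mu q j n) - r i x a (\<lambda>j. mu t j n)\<bar>"
      using b by (simp add: abs_mult mult_left_le_one_le)
  qed
  also have "\<dots> \<le> Fdev t q"
    unfolding Fdev_def
    by (rule member_le_sum[of i UNIV "\<lambda>i. \<Sum>n\<le>N. \<Sum>x\<in>UNIV. \<Sum>a\<in>UNIV. \<bar>r i x a (\<lambda>j. mu q j n) - r i x a (\<lambda>j. mu t j n)\<bar>"])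
      (auto intro: sum_nonneg)
  finally show ?thesis .
qed

lemma near_opt:
  assumes t: "1 < t" and e: "0 < e"
  shows "\<exists>d>0. \<forall>h. 0 < h \<longrightarrow> h < d \<longrightarrow> h \<le> t - 1 \<longrightarrow>
    V i (mu t) - 2 * e \<le> (\<Sum>n\<le>N. \<Sum>x\<in>UNIV. \<Sum>a\<in>UNIV. avg (t - h) t i n x a * r i x a (\<lambda>j. mu t j n))"
proof -
  obtain d where d: "d > 0" "\<forall>s. 1 \<le> s \<longrightarrow> s \<le> t \<longrightarrow> t - s < d \<longrightarrow> Fdev t s < e"
    using Fdev_small t e by (meson less_imp_le)
  show ?thesis
  proof (intro exI[of _ d] conjI allI impI)
    fix h assume h: "0 < h" "h < d" "h \<le> t - 1"
    define c where "c n x a = r i x a (\<lambda>j. mu t j n)" for n x a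
    define F where "F s = (\<Sum>n\<le>N. \<Sum>x\<in>UNIV. \<Sum>a\<in>UNIV. sa s i n x a * c n x a)" for s
    have pt: "V i (mu t) - 2 * e \<le> F s" if s: "s \<in> {t - h..t}" for s
    proof -
      have s1: "1 \<le> s" "s \<le> t" "t - s < d" using s h by auto
      have Fd: "Fdev t s < e" using d(2) s1 by blast
      let ?Ss = "(\<Sum>n\<le>N. \<Sum>x\<in>UNIV. \<Sum>a\<in>UNIV. sa s i n x a * r i x a (\<lambda>j. mu s j n))"
      let ?Ts = "(\<Sum>n\<le>N. \<Sum>x\<in>UNIV. \<Sum>a\<in>UNIV. sa t i n x a * r i x a (\<lambda>j. mu s j n))"
      let ?Tt = "(\<Sum>n\<le>N. \<Sum>x\<in>UNIV. \<Sum>a\<in>UNIV. sa t i n x a * r i x a (\<lambda>j. mu t j n))"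
      have a1: "\<bar>?Ss - F s\<bar> \<le> Fdev t s" unfolding F_def c_def using sa_dev[of s s] s1 by simp
      have a2: "?Ss = V i (mu s)" using V_br s1 by simp
      have a3: "?Ts \<le> V i (mu s)" using V_ge[of "pibr t i" i "mu s"] br t by (simp add: J_sa)
      have a4: "\<bar>?Ts - ?Tt\<bar> \<le> Fdev t s" using sa_dev[of t s] s1 t by simp
      have a5: "?Tt = V i (mu t)" using V_br t by simp
      show ?thesis using a1 a2 a3 a4 a5 Fd by linarith
    qed
    have uv: "0 \<le> t - h" "t - h < t" using h t by auto
    have I: "F integrable_on {t - h..t}" unfolding F_def by (rule avg_lin(2)[OF uv])
    have "integral {t - h..t} (\<lambda>s. V i (mu t) - 2 * e) \<le> integral {t - h..t} F"
      by (rule integral_le[OF integrable_const_ivl I pt])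
    then have "h * (V i (mu t) - 2 * e) \<le> integral {t - h..t} F" using h by simp
    then have "V i (mu t) - 2 * e \<le> (1 / h) * integral {t - h..t} F" using h by (simp add: field_simps)
    also have "\<dots> = (\<Sum>n\<le>N. \<Sum>x\<in>UNIV. \<Sum>a\<in>UNIV. avg (t - h) t i n x a * c n x a)"
      unfolding F_def using avg_lin(1)[OF uv] by simp
    finally show "V i (mu t) - 2 * e \<le> (\<Sum>n\<le>N. \<Sum>x\<in>UNIV. \<Sum>a\<in>UNIV. avg (t - h) t i n x a * r i x a (\<lambda>j. mu t j n))"
      unfolding c_def .
  qed (rule d(1))
qed

end


lemma eps_le:
  fixes A B :: real
  assumes "\<forall>e>0. A - 2 * e \<le> B"
  shows "A \<le> B"
proof (rule ccontr)
  assume c: "\<not> A \<le> B"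
  then have "(A - B) / 4 > 0" by simp
  with assms have "A - 2 * ((A - B) / 4) \<le> B" by blast
  then show False using c by (simp add: field_simps)
qed

lemma sum4_lin:
  fixes c :: real
  shows "(\<Sum>i\<in>I. \<Sum>n\<in>A. \<Sum>x\<in>B. \<Sum>a\<in>C. c * f i n x a - c * g i n x a)
    = c * (\<Sum>i\<in>I. \<Sum>n\<in>A. \<Sum>x\<in>B. \<Sum>a\<in>C. f i n x a) - c * (\<Sum>i\<in>I. \<Sum>n\<in>A. \<Sum>x\<in>B. \<Sum>a\<in>C. g i n x a)"
  by (simp add: sum_subtractf sum_distrib_left)

lemma sum4_sub:
  fixes f g :: "_ \<Rightarrow> _ \<Rightarrow> _ \<Rightarrow> _ \<Rightarrow> real"
  shows "(\<Sum>i\<in>I. \<Sum>n\<in>A. \<Sum>x\<in>B. \<Sum>a\<in>C. f i n x a - g i n x a)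
    = (\<Sum>i\<in>I. (\<Sum>n\<in>A. \<Sum>x\<in>B. \<Sum>a\<in>C. f i n x a) - (\<Sum>n\<in>A. \<Sum>x\<in>B. \<Sum>a\<in>C. g i n x a))"
  by (simp add: sum_subtractf)

context fpl
begin

lemma main_ineq:
  assumes t: "1 < t"
    and D: "((\<lambda>s. exploitability N mu0 P r (pol s)) has_real_derivative D) (at t within {1..})"
  shows "D \<le> - (1 / t) * exploitability N mu0 P r (pol t)"
proof -
  define \<phi> where "\<phi> s = exploitability N mu0 P r (pol s)" for s
  define R where "R s i n x a = r i x a (\<lambda>j. mu s j n)" for s i n x a
  define h where "h k = (t - 1) / real (Suc k)" for k
  have h0: "0 < h k" "h k \<le> t - 1" for k
  proof -
    show "0 < h k" unfolding h_def using t by simp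
    have "(t - 1) / real (Suc k) \<le> (t - 1) / 1" using t by (intro divide_left_mono) auto
    then show "h k \<le> t - 1" unfolding h_def by simp
  qed
  have hlim: "h \<longlonglongrightarrow> 0"
  proof -
    have i0: "(\<lambda>k. inverse (real (Suc k))) \<longlonglongrightarrow> 0"
      using LIMSEQ_Suc[OF lim_inverse_n'] by (simp add: inverse_eq_divide)
    have "(\<lambda>k. (t - 1) * inverse (real (Suc k))) \<longlonglongrightarrow> (t - 1) * 0"
      by (intro tendsto_mult tendsto_const i0)
    then show ?thesis unfolding h_def by (simp add: divide_inverse)
  qed
  define G where "G k i n x a = avg (t - h k) t i n x a" for k i n x a
  have Gb: "\<bar>G k i n x a\<bar> \<le> 1" if "n \<le> N" for k i n x a
    using avg_bounds[of "t - h k" t n i x a] h0[of k] t that unfolding G_def by auto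
  define S where "S = (UNIV :: 'p set) \<times> {..N} \<times> (UNIV :: 'x set) \<times> (UNIV :: 'a set)"
  have fS: "finite S" unfolding S_def by simp
  obtain \<sigma> l where \<sigma>: "strict_mono \<sigma>"
    and conv: "\<forall>q\<in>S. (\<lambda>k. (case q of (i, n, x, a) \<Rightarrow> G (\<sigma> k) i n x a)) \<longlonglongrightarrow> l q"
  proof -
    have "\<forall>k. \<forall>q\<in>S. \<bar>(\<lambda>k q. case q of (i, n, x, a) \<Rightarrow> G k i n x a) k q\<bar> \<le> 1"
      unfolding S_def using Gb by auto
    from finite_subseq[OF fS this] obtain \<sigma> l where
      "strict_mono \<sigma>" "\<forall>j\<in>S. (\<lambda>k. (case j of (i, n, x, a) \<Rightarrow> G (\<sigma> k) i n x a)) \<longlonglongrightarrow> l j"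
      by blast
    then show ?thesis using that by auto
  qed
  define L where "L i n x a = l (i, n, x, a)" for i n x a
  define hh where "hh k = h (\<sigma> k)" for k
  define GG where "GG k = G (\<sigma> k)" for k
  have GL: "(\<lambda>k. GG k i n x a) \<longlonglongrightarrow> L i n x a" if "n \<le> N" for i n x a
    using conv that unfolding S_def L_def GG_def by auto
  have hh0: "0 < hh k" "hh k \<le> t - 1" "hh k < t" "1 \<le> t - hh k" for k
    using h0[of "\<sigma> k"] t unfolding hh_def by auto
  have hhlim: "hh \<longlonglongrightarrow> 0"
    using LIMSEQ_subseq_LIMSEQ[OF hlim \<sigma>] unfolding hh_def o_def by simp
  have GGocc: "occ N (mu0 i) P (GG k i)" for k i
    unfolding GG_def G_def using avg_occ[of "t - h (\<sigma> k)" t i] h0[of "\<sigma> k"] t by simp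
  have Locc: "occ N (mu0 i) P (L i)" for i
    by (rule occ_limit[of _ _ _ "\<lambda>k. GG k i"]) (use GGocc GL in auto)
  have Lopt: "(\<Sum>n\<le>N. \<Sum>x\<in>UNIV. \<Sum>a\<in>UNIV. L i n x a * R t i n x a) = V i (mu t)" for i
  proof (rule antisym)
    show "(\<Sum>n\<le>N. \<Sum>x\<in>UNIV. \<Sum>a\<in>UNIV. L i n x a * R t i n x a) \<le> V i (mu t)"
      unfolding R_def by (rule V_occ[OF Locc])
    have lim: "(\<lambda>k. \<Sum>n\<le>N. \<Sum>x\<in>UNIV. \<Sum>a\<in>UNIV. GG k i n x a * R t i n x a)
        \<longlonglongrightarrow> (\<Sum>n\<le>N. \<Sum>x\<in>UNIV. \<Sum>a\<in>UNIV. L i n x a * R t i n x a)"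
      by (intro tendsto_sum tendsto_mult tendsto_const GL) auto
    have ge: "V i (mu t) - 2 * e \<le> (\<Sum>n\<le>N. \<Sum>x\<in>UNIV. \<Sum>a\<in>UNIV. L i n x a * R t i n x a)" if e: "0 < e" for e
    proof -
      obtain d where d: "d > 0" "\<forall>h. 0 < h \<longrightarrow> h < d \<longrightarrow> h \<le> t - 1 \<longrightarrow>
          V i (mu t) - 2 * e \<le> (\<Sum>n\<le>N. \<Sum>x\<in>UNIV. \<Sum>a\<in>UNIV. avg (t - h) t i n x a * r i x a (\<lambda>j. mu t j n))"
        using near_opt[OF t e] by blast
      obtain k0 where k0: "\<forall>k\<ge>k0. norm (hh k - 0) < d" using LIMSEQ_D[OF hhlim d(1)] by blast
      have "\<forall>k\<ge>k0. V i (mu t) - 2 * e \<le> (\<Sum>n\<le>N. \<Sum>x\<in>UNIV. \<Sum>a\<in>UNIV. GG k i n x a * R t i n x a)"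
      proof (intro allI impI)
        fix k assume k: "k0 \<le> k"
        have "hh k < d" using k0 k hh0[of k] by auto
        then show "V i (mu t) - 2 * e \<le> (\<Sum>n\<le>N. \<Sum>x\<in>UNIV. \<Sum>a\<in>UNIV. GG k i n x a * R t i n x a)"
          using d(2) hh0[of k] unfolding GG_def G_def R_def hh_def by blast
      qed
      then show ?thesis using LIMSEQ_le_const[OF lim] by blast
    qed
    show "V i (mu t) \<le> (\<Sum>n\<le>N. \<Sum>x\<in>UNIV. \<Sum>a\<in>UNIV. L i n x a * R t i n x a)"
      by (rule eps_le) (use ge in blast)
  qed

  have rhoL: "(\<lambda>k. rho (t - hh k) i n x a) \<longlonglongrightarrow> rho t i n x a" if n: "n \<le> N" for i n x a
  proof -
    have "(\<lambda>k. rho (t - hh k) i n x a - rho t i n x a) \<longlonglongrightarrow> 0"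
    proof (rule Lim_null_comparison)
      show "\<forall>\<^sub>F k in sequentially. norm (rho (t - hh k) i n x a - rho t i n x a) \<le> hh k / t"
      proof (rule always_eventually, rule allI)
        fix k
        have "\<bar>rho t i n x a - rho (t - hh k) i n x a\<bar> \<le> (t - (t - hh k)) / t"
          by (rule rho_lip) (use hh0[of k] n in auto)
        then show "norm (rho (t - hh k) i n x a - rho t i n x a) \<le> hh k / t" by (simp add: abs_minus_commute)
      qed
      show "(\<lambda>k. hh k / t) \<longlonglongrightarrow> 0" using tendsto_divide[OF hhlim tendsto_const[of t]] t by simp
    qed
    then show ?thesis by (simp add: LIM_zero_iff)
  qed
  have split: "rho t i n x a = rho (t - hh k) i n x a + (hh k / t) * (GG k i n x a - rho (t - hh k) i n x a)"
    if n: "n \<le> N" for k i n x a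
    using rho_split[OF hh0(1)[of k] hh0(3)[of k] n, of i x a] unfolding GG_def G_def hh_def by simp
  have phi_t: "\<phi> t = (\<Sum>i\<in>UNIV. (\<Sum>n\<le>N. \<Sum>x\<in>UNIV. \<Sum>a\<in>UNIV. L i n x a * R t i n x a)
       - (\<Sum>n\<le>N. \<Sum>x\<in>UNIV. \<Sum>a\<in>UNIV. rho t i n x a * R t i n x a))"
    using phi_eq[of t] Lopt t unfolding \<phi>_def R_def by simp
  have ineq: "\<phi> t - \<phi> (t - hh k) \<le> (\<Sum>i\<in>UNIV. \<Sum>n\<le>N. \<Sum>x\<in>UNIV. \<Sum>a\<in>UNIV.
      (L i n x a - rho (t - hh k) i n x a) * (R t i n x a - R (t - hh k) i n x a)
      - (hh k / t) * (GG k i n x a - rho (t - hh k) i n x a) * R t i n x a)" for k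
  proof -
    define s where "s = t - hh k"
    have s1: "1 \<le> s" using hh0[of k] unfolding s_def by simp
    have phi_s: "\<phi> s = (\<Sum>i\<in>UNIV. V i (mu s) - (\<Sum>n\<le>N. \<Sum>x\<in>UNIV. \<Sum>a\<in>UNIV. rho s i n x a * R s i n x a))"
      using phi_eq[OF s1] unfolding \<phi>_def R_def by simp
    have Vs: "(\<Sum>n\<le>N. \<Sum>x\<in>UNIV. \<Sum>a\<in>UNIV. L i n x a * R s i n x a) \<le> V i (mu s)" for i
      unfolding R_def by (rule V_occ[OF Locc])
    have "\<phi> t - \<phi> s \<le> (\<Sum>i\<in>UNIV. (\<Sum>n\<le>N. \<Sum>x\<in>UNIV. \<Sum>a\<in>UNIV. L i n x a * R t i n x a)
       - (\<Sum>n\<le>N. \<Sum>x\<in>UNIV. \<Sum>a\<in>UNIV. rho t i n x a * R t i n x a))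
       - (\<Sum>i\<in>UNIV. (\<Sum>n\<le>N. \<Sum>x\<in>UNIV. \<Sum>a\<in>UNIV. L i n x a * R s i n x a)
       - (\<Sum>n\<le>N. \<Sum>x\<in>UNIV. \<Sum>a\<in>UNIV. rho s i n x a * R s i n x a))"
      unfolding phi_t phi_s using Vs by (intro diff_left_mono sum_mono diff_right_mono) auto
    also have "\<dots> = (\<Sum>i\<in>UNIV. \<Sum>n\<le>N. \<Sum>x\<in>UNIV. \<Sum>a\<in>UNIV.
       L i n x a * R t i n x a - rho t i n x a * R t i n x a - L i n x a * R s i n x a + rho s i n x a * R s i n x a)"
      by (simp add: sum_subtractf sum.distrib)
    also have "\<dots> = (\<Sum>i\<in>UNIV. \<Sum>n\<le>N. \<Sum>x\<in>UNIV. \<Sum>a\<in>UNIV.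
      (L i n x a - rho s i n x a) * (R t i n x a - R s i n x a)
      - (hh k / t) * (GG k i n x a - rho s i n x a) * R t i n x a)"
    proof (intro sum.cong refl)
      fix i n x a assume n: "n \<in> {..N}"
      have e: "rho t i n x a = rho s i n x a + (hh k / t) * (GG k i n x a - rho s i n x a)"
        using split[where k=k and i=i and n=n and x=x and a=a] n unfolding s_def by simp
      show "L i n x a * R t i n x a - rho t i n x a * R t i n x a - L i n x a * R s i n x a + rho s i n x a * R s i n x a
        = (L i n x a - rho s i n x a) * (R t i n x a - R s i n x a) - (hh k / t) * (GG k i n x a - rho s i n x a) * R t i n x a"
        unfolding e by (simp add: algebra_simps)
    qed
    finally show ?thesis unfolding s_def .
  qed

  define Q where "Q k = (\<Sum>i\<in>UNIV. \<Sum>n\<le>N. \<Sum>x\<in>UNIV. \<Sum>a\<in>UNIV.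
      (L i n x a - rho (t - hh k) i n x a) * ((R t i n x a - R (t - hh k) i n x a) / hh k)
      - (1 / t) * (GG k i n x a - rho (t - hh k) i n x a) * R t i n x a)" for k
  have ineq2: "(\<phi> t - \<phi> (t - hh k)) / hh k \<le> Q k" for k
  proof -
    have hk: "0 < hh k" using hh0 by simp
    have "(\<phi> t - \<phi> (t - hh k)) / hh k \<le> (\<Sum>i\<in>UNIV. \<Sum>n\<le>N. \<Sum>x\<in>UNIV. \<Sum>a\<in>UNIV.
      (L i n x a - rho (t - hh k) i n x a) * (R t i n x a - R (t - hh k) i n x a)
      - (hh k / t) * (GG k i n x a - rho (t - hh k) i n x a) * R t i n x a) / hh k"
      using ineq[of k] hk by (intro divide_right_mono) auto
    also have "\<dots> = Q k" unfolding Q_def sum_divide_distrib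
    proof (intro sum.cong refl)
      fix i n x a
      show "((L i n x a - rho (t - hh k) i n x a) * (R t i n x a - R (t - hh k) i n x a)
          - (hh k / t) * (GG k i n x a - rho (t - hh k) i n x a) * R t i n x a) / hh k
        = (L i n x a - rho (t - hh k) i n x a) * ((R t i n x a - R (t - hh k) i n x a) / hh k)
          - (1 / t) * (GG k i n x a - rho (t - hh k) i n x a) * R t i n x a"
        using hk by (simp add: field_simps)
    qed
    finally show ?thesis .
  qed
  have lhs_lim: "(\<lambda>k. (\<phi> t - \<phi> (t - hh k)) / hh k) \<longlonglongrightarrow> D"
  proof -
    have d1: "((\<lambda>y. (\<phi> y - \<phi> t) / (y - t)) \<longlongrightarrow> D) (at t within {1..})"
      using D unfolding has_field_derivative_iff \<phi>_def .
    have yk: "filterlim (\<lambda>k. t - hh k) (at t within {1..}) sequentially"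
      unfolding filterlim_at
    proof
      show "\<forall>\<^sub>F k in sequentially. t - hh k \<in> {1..} \<and> t - hh k \<noteq> t"
        using hh0 by (intro always_eventually) (auto simp: less_imp_neq)
      have "(\<lambda>k. t - hh k) \<longlonglongrightarrow> t - 0" by (intro tendsto_intros hhlim)
      then show "(\<lambda>k. t - hh k) \<longlonglongrightarrow> t" by simp
    qed
    have "(\<lambda>k. (\<phi> (t - hh k) - \<phi> t) / (t - hh k - t)) \<longlonglongrightarrow> D"
      by (rule filterlim_compose[OF d1 yk])
    moreover have "(\<lambda>k. (\<phi> (t - hh k) - \<phi> t) / (t - hh k - t)) = (\<lambda>k. (\<phi> t - \<phi> (t - hh k)) / hh k)"
    proof (rule ext)
      fix k
      have "hh k \<noteq> 0" using hh0[of k] by simp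
      then show "(\<phi> (t - hh k) - \<phi> t) / (t - hh k - t) = (\<phi> t - \<phi> (t - hh k)) / hh k"
        by (simp add: field_simps)
    qed
    ultimately show ?thesis by simp
  qed

  define mt where "mt n = vm (\<lambda>j. mu t j n)" for n
  define vL where "vL n = vm (\<lambda>j y. \<Sum>b\<in>UNIV. L j n y b)" for n
  define w where "w n = vm (\<lambda>j y. (1 / t) * ((\<Sum>b\<in>UNIV. L j n y b) - mu t j n y))" for n
  have w_eq: "w n = (1 / t) *\<^sub>R (vL n - mt n)" for n
    unfolding w_def vL_def mt_def vm_def by (simp add: vec_eq_iff algebra_simps)
  have msplit: "mu t j n y = mu (t - hh k) j n y + (hh k / t) * ((\<Sum>b\<in>UNIV. GG k j n y b) - mu (t - hh k) j n y)"
    if n: "n \<le> N" for k j n y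
  proof -
    have "mu t j n y = (\<Sum>b\<in>UNIV. rho (t - hh k) j n y b + (hh k / t) * (GG k j n y b - rho (t - hh k) j n y b))"
      unfolding fp_mu_def using split[where k=k and i=j and n=n and x=y] n by simp
    also have "\<dots> = mu (t - hh k) j n y + (hh k / t) * ((\<Sum>b\<in>UNIV. GG k j n y b) - mu (t - hh k) j n y)"
      unfolding fp_mu_def by (simp add: sum.distrib sum_subtractf flip: sum_divide_distrib sum_distrib_left)
    finally show ?thesis .
  qed
  have muL: "(\<lambda>k. mu (t - hh k) j n y) \<longlonglongrightarrow> mu t j n y" if n: "n \<le> N" for j n y
    unfolding fp_mu_def by (intro tendsto_sum rhoL n)
  have Rlim: "(\<lambda>k. (R t i n x a - R (t - hh k) i n x a) / hh k) \<longlonglongrightarrow> gg i x a (mt n) \<bullet> w n"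
    if n: "n \<le> N" for i n x a
  proof -
    have q: "(\<lambda>k. (mt n - vm (\<lambda>j. mu (t - hh k) j n)) /\<^sub>R hh k) \<longlonglongrightarrow> w n"
    proof -
      have eq: "(mt n - vm (\<lambda>j. mu (t - hh k) j n)) /\<^sub>R hh k
          = vm (\<lambda>j y. (1 / t) * ((\<Sum>b\<in>UNIV. GG k j n y b) - mu (t - hh k) j n y))" for k
      proof -
        have hk: "hh k \<noteq> 0" using hh0[of k] by simp
        have c: "(mu t j n y - mu (t - hh k) j n y) / hh k = (1 / t) * ((\<Sum>b\<in>UNIV. GG k j n y b) - mu (t - hh k) j n y)" for j y
          using msplit[where k=k and j=j and n=n and y=y] n hk t by (simp add: field_simps)
        show ?thesis unfolding mt_def vm_def using c by (simp add: vec_eq_iff divide_inverse mult.commute)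
      qed
      have "(\<lambda>k. vm (\<lambda>j y. (1 / t) * ((\<Sum>b\<in>UNIV. GG k j n y b) - mu (t - hh k) j n y))) \<longlonglongrightarrow> w n"
        unfolding vm_def w_def
        by (intro tendsto_vec_lambda tendsto_mult tendsto_const tendsto_diff tendsto_sum GL muL n)
      then show ?thesis unfolding eq .
    qed
    have "(\<lambda>k. (r i x a (vec_to_fun (mt n)) - r i x a (vec_to_fun (vm (\<lambda>j. mu (t - hh k) j n)))) / hh k)
        \<longlonglongrightarrow> gg i x a (mt n) \<bullet> w n"
    proof (rule deriv_seq[where S=simplex_profiles])
      show "((\<lambda>m. r i x a (vec_to_fun m)) has_derivative (\<bullet>) (gg i x a (mt n))) (at (mt n) within simplex_profiles)"
        unfolding mt_def using gg_deriv[OF mu_simplex[of t n]] t n by simp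
      show "\<forall>k. vm (\<lambda>j. mu (t - hh k) j n) \<in> simplex_profiles" using mu_simplex hh0 n by simp
      show "\<forall>k. 0 < hh k" using hh0 by simp
      show "hh \<longlonglongrightarrow> 0" by (rule hhlim)
    qed (rule q)
    then show ?thesis unfolding R_def mt_def by simp
  qed
  define Qv where "Qv = (\<Sum>i\<in>UNIV. \<Sum>n\<le>N. \<Sum>x\<in>UNIV. \<Sum>a\<in>UNIV.
      (L i n x a - rho t i n x a) * (gg i x a (mt n) \<bullet> w n)
      - (1 / t) * (L i n x a - rho t i n x a) * R t i n x a)"
  have Qlim: "Q \<longlonglongrightarrow> Qv"
    unfolding Q_def Qv_def
    by (intro tendsto_sum tendsto_diff tendsto_mult tendsto_const) (auto intro: GL rhoL Rlim)
  have DQ: "D \<le> Qv"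
    by (rule LIMSEQ_le[OF lhs_lim Qlim]) (use ineq2 in blast)
  define Z where "Z n = (\<Sum>i\<in>UNIV. \<Sum>x\<in>UNIV. \<Sum>a\<in>UNIV. (L i n x a - rho t i n x a) * (gg i x a (mt n) \<bullet> (vL n - mt n)))" for n
  have Zle: "Z n \<le> 0" if n: "n \<le> N" for n
  proof -
    have mteq: "mt n = vm (\<lambda>j y. \<Sum>b\<in>UNIV. rho t j n y b)"
      unfolding mt_def by (rule arg_cong[where f=vm]) (intro ext, simp add: fp_mu_def)
    have dA: "\<forall>i. is_dist (\<lambda>(x, a). rho t i n x a)"
      using occ_is_dist[OF rho_occ init[rule_format] trans n] t by simp
    have dB: "\<forall>i. is_dist (\<lambda>(x, a). L i n x a)"
      using occ_is_dist[OF Locc init[rule_format] trans n] by simp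
    show ?thesis
      using inf_mono[OF dA dB] unfolding Z_def mteq vL_def .
  qed
  have Qv_eq: "Qv = (1 / t) * (\<Sum>n\<le>N. Z n) - (1 / t) * \<phi> t"
  proof -
    define X where "X i n x a = (L i n x a - rho t i n x a) * (gg i x a (mt n) \<bullet> (vL n - mt n))" for i n x a
    define Y where "Y i n x a = L i n x a * R t i n x a - rho t i n x a * R t i n x a" for i n x a
    have "Qv = (\<Sum>i\<in>UNIV. \<Sum>n\<le>N. \<Sum>x\<in>UNIV. \<Sum>a\<in>UNIV. (1 / t) * X i n x a - (1 / t) * Y i n x a)"
      unfolding Qv_def X_def Y_def w_eq by (intro sum.cong refl) (simp add: algebra_simps)
    also have "\<dots> = (1 / t) * (\<Sum>i\<in>UNIV. \<Sum>n\<le>N. \<Sum>x\<in>UNIV. \<Sum>a\<in>UNIV. X i n x a)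
        - (1 / t) * (\<Sum>i\<in>UNIV. \<Sum>n\<le>N. \<Sum>x\<in>UNIV. \<Sum>a\<in>UNIV. Y i n x a)"
      by (rule sum4_lin)
    also have "(\<Sum>i\<in>UNIV. \<Sum>n\<le>N. \<Sum>x\<in>UNIV. \<Sum>a\<in>UNIV. Y i n x a) = \<phi> t"
      unfolding phi_t Y_def by (rule sum4_sub)
    also have "(\<Sum>i\<in>UNIV. \<Sum>n\<le>N. \<Sum>x\<in>UNIV. \<Sum>a\<in>UNIV. X i n x a) = (\<Sum>n\<le>N. Z n)"
      unfolding Z_def X_def by (rule sum.swap)
    finally show ?thesis .
  qed
  have "(\<Sum>n\<le>N. Z n) \<le> 0" using Zle by (intro sum_nonpos) auto
  then have "(1 / t) * (\<Sum>n\<le>N. Z n) \<le> 0" using t by (simp add: divide_nonpos_pos)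
  then show ?thesis using DQ Qv_eq unfolding \<phi>_def by simp
qed

end


theorem theorem1:
  fixes N :: nat
    and mu0 :: "'p::finite \<Rightarrow> 'x::finite \<Rightarrow> real"
    and P :: "'x \<Rightarrow> 'a::finite \<Rightarrow> 'x \<Rightarrow> real"
    and r :: "'p \<Rightarrow> 'x \<Rightarrow> 'a \<Rightarrow> ('p \<Rightarrow> 'x \<Rightarrow> real) \<Rightarrow> real"
    and pibr :: "real \<Rightarrow> 'p \<Rightarrow> nat \<Rightarrow> 'x \<Rightarrow> 'a \<Rightarrow> real"
    and pol :: "real \<Rightarrow> 'p \<Rightarrow> nat \<Rightarrow> 'x \<Rightarrow> 'a \<Rightarrow> real"
  assumes init: "\<forall>i. is_dist (mu0 i)"
    and trans: "\<forall>x a. is_dist (P x a)"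
    and mono: "weakly_monotone r"
    and C1: "\<forall>i x a. C1_on (\<lambda>m::real ^ 'x ^ 'p. r i x a (vec_to_fun m)) simplex_profiles"
    and unif: "\<forall>s\<in>{0..<1}. \<forall>i n x a. pibr s i n x a = 1 / real CARD('a)"
    and br: "\<forall>t\<ge>1. \<forall>i. is_policy N (pibr t i) \<and>
               (\<forall>pol'. is_policy N pol' \<longrightarrow>
                  J N (mu0 i) P (r i) pol' (fp_mu mu0 P pibr t)
                    \<le> J N (mu0 i) P (r i) (pibr t i) (fp_mu mu0 P pibr t))"
    and meas: "\<forall>i n x a. set_borel_measurable borel {0..} (\<lambda>s. pibr s i n x a)"
    and pol_pos: "\<forall>t\<ge>1. \<forall>i n x a. fp_mu mu0 P pibr t i n x > 0 \<longrightarrow>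
               pol t i n x a = fp_rho mu0 P pibr t i n x a / fp_mu mu0 P pibr t i n x"
    and pol_dist: "\<forall>t\<ge>1. \<forall>i n x. is_dist (pol t i n x)"
    and diff: "(\<lambda>t. exploitability N mu0 P r (pol t)) differentiable_on {1..}"
  shows "(\<forall>t D. 1 \<le> t \<longrightarrow>
            ((\<lambda>t. exploitability N mu0 P r (pol t)) has_real_derivative D) (at t within {1..}) \<longrightarrow>
            D \<le> - (1 / t) * exploitability N mu0 P r (pol t))
       \<and> (\<forall>t\<ge>1. exploitability N mu0 P r (pol t) \<le> exploitability N mu0 P r (pol 1) / t)"
proof -
  interpret fpl N mu0 P r pibr pol
    using init trans mono C1 unif br meas pol_pos pol_dist by unfold_locales
  define \<phi> where "\<phi> s = exploitability N mu0 P r (pol s)" for s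
  define \<psi> where "\<psi> s = s * \<phi> s" for s
  have cont: "continuous_on {1..} \<phi>" unfolding \<phi>_def by (rule differentiable_imp_continuous_on[OF diff])
  have dpsi: "\<exists>y. (\<psi> has_real_derivative y) (at s) \<and> y \<le> 0" if s: "1 < s" for s
  proof -
    have "\<phi> differentiable at s within {1..}" using diff s unfolding \<phi>_def differentiable_on_def by auto
    then obtain D where D: "(\<phi> has_real_derivative D) (at s within {1..})"
      unfolding real_differentiable_def by blast
    have Dle: "D \<le> - (1 / s) * \<phi> s" using main_ineq[OF s] D unfolding \<phi>_def by blast
    have "at s within {1..} = at s" using s by (intro at_within_interior) simp
    then have Da: "(\<phi> has_real_derivative D) (at s)" using D by simp
    have "(\<psi> has_real_derivative (1 * \<phi> s + D * s)) (at s)"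
      unfolding \<psi>_def by (rule DERIV_mult[OF DERIV_ident Da])
    moreover have "1 * \<phi> s + D * s \<le> 0"
    proof -
      have "s * D \<le> s * (- (1 / s) * \<phi> s)" using Dle s by (intro mult_left_mono) auto
      then show ?thesis using s by (simp add: mult.commute)
    qed
    ultimately show ?thesis by blast
  qed
  have decr: "\<psi> b \<le> \<psi> a" if ab: "1 \<le> a" "a \<le> b" for a b
  proof (rule DERIV_nonpos_imp_decreasing_open[OF ab(2)])
    show "\<And>x. a < x \<Longrightarrow> x < b \<Longrightarrow> \<exists>y. (\<psi> has_real_derivative y) (at x) \<and> y \<le> 0"
      using dpsi ab by auto
    have "continuous_on {a..b} \<phi>" using continuous_on_subset[OF cont] ab by auto
    then show "continuous_on {a..b} \<psi>" unfolding \<psi>_def by (intro continuous_intros)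
  qed
  have part2: "\<forall>t\<ge>1. \<phi> t \<le> \<phi> 1 / t"
  proof (intro allI impI)
    fix t :: real assume t: "1 \<le> t"
    have "t * \<phi> t \<le> 1 * \<phi> 1" using decr[of 1 t] t unfolding \<psi>_def by simp
    then show "\<phi> t \<le> \<phi> 1 / t" using t by (simp add: field_simps)
  qed
  have part1: "D \<le> - (1 / t) * \<phi> t" if t: "1 \<le> t" and D: "(\<phi> has_real_derivative D) (at t within {1..})" for t D
  proof (cases "t = 1")
    case False
    then have "1 < t" using t by simp
    then show ?thesis using main_ineq D unfolding \<phi>_def by blast
  next
    case True
    have D1: "(\<phi> has_real_derivative D) (at 1 within {1..})" using D True by simp
    have "(\<psi> has_real_derivative (1 * \<phi> 1 + D * 1)) (at 1 within {1..})"
      unfolding \<psi>_def by (rule DERIV_mult[OF DERIV_ident D1])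
    then have lim: "((\<lambda>y. (\<psi> y - \<psi> 1) / (y - 1)) \<longlongrightarrow> \<phi> 1 + D) (at 1 within {1..})"
      unfolding has_field_derivative_iff by simp
    have ev: "\<forall>\<^sub>F y in at 1 within {1..}. (\<psi> y - \<psi> 1) / (y - 1) \<le> 0"
      unfolding eventually_at_filter
    proof (rule always_eventually, intro allI impI)
      fix y :: real assume y: "y \<noteq> 1" "y \<in> {1..}"
      then have "\<psi> y \<le> \<psi> 1" using decr[of 1 y] by simp
      then show "(\<psi> y - \<psi> 1) / (y - 1) \<le> 0" using y by (simp add: divide_nonpos_pos)
    qed
    have nb: "\<not> trivial_limit (at (1::real) within {1..})" by (simp add: at_within_Ici_at_right)
    have "\<phi> 1 + D \<le> 0" by (rule tendsto_upperbound[OF lim ev nb])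
    then show ?thesis using True by simp
  qed
  show ?thesis using part1 part2 unfolding \<phi>_def by blast
qed


end
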